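(* Let $G$ be a locally finite connected graph and $\overline{T}$ a spanning topological caterpillar of $G$. Let $v,w\in V(G)$ with $V_v\le_T V_w$. Then for any two vertices $x,y$ with $V_v<_T V_x<_T V_w$ and $V_v<_T V_y<_T V_w$ there exists a finite $x$–$y$ path in the induced subgraph $G[I_{vw}]$, where $I_{vw}=\bigcup\{V_u : V_v\le_T V_u\le_T V_w\}$.
   Context: All graphs are simple. For a locally finite connected graph $G$, $|G|$ is the Freudenthal compactification (the 1-complex $G$ plus its ends, i.e. classes of rays not separable by finitely many vertices, with the standard topology). An arc is a homeomorphic image of $[0,1]$ in $|G|$, a circle one of $S^1$; $\overline{F}$ is the closure in $|G|$ of a subgraph $F$. A topological caterpillar is a circle-free arc-connected closure $\overline{T}$ of a forest $T\subseteq G$ such that $\overline{T-L}$ is an arc $A$, where $L$ is the set of vertices of degree $1$ in $T$; it is spanning if $V(T)=V(G)$. The arc $A$ induces a linear order $<_A$ on $V(T)\setminus L$. For $<_A$-consecutive $v'<_A w'$ in $V(T)\setminus L$ put $P_{w'}=\{w'\}\cup(N_T(v')\cap L)$; if $<_A$ has a maximum $m$ put $P^+=N_T(m)\cap L$; if it has a minimum $s$ put $P^-=\{s\}$. These sets form a partition $\mathcal{P}_T$ of $V(T)$, and $V_u$ denotes the class containing $u$. The linear order $<_T$ on $\mathcal{P}_T$ is given by $V_{v'}<_T V_{w'}$ whenever $v',w'\in V(T)\setminus L$ with $v'<_A w'$, together with $P^-<_T P<_T P^+$ for all other classes $P$. *)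

theory Defs
  imports "HOL-Analysis.Analysis"
begin

definition simple_graph :: "'a set \<Rightarrow> ('a \<Rightarrow> 'a \<Rightarrow> bool) \<Rightarrow> bool" where
  "simple_graph V E \<longleftrightarrow> (\<forall>x y. E x y \<longrightarrow> E y x \<and> x \<noteq> y \<and> x \<in> V \<and> y \<in> V)"

definition nbhd :: "('a \<Rightarrow> 'a \<Rightarrow> bool) \<Rightarrow> 'a \<Rightarrow> 'a set" where
  "nbhd E v = {u. E v u}"

definition locally_finite :: "'a set \<Rightarrow> ('a \<Rightarrow> 'a \<Rightarrow> bool) \<Rightarrow> bool" where
  "locally_finite V E \<longleftrightarrow> (\<forall>v\<in>V. finite (nbhd E v))"

definition is_path :: "('a \<Rightarrow> 'a \<Rightarrow> bool) \<Rightarrow> 'a list \<Rightarrow> bool" where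
  "is_path E p \<longleftrightarrow> p \<noteq> [] \<and> distinct p \<and> (\<forall>i. Suc i < length p \<longrightarrow> E (p ! i) (p ! Suc i))"

definition path_in :: "('a \<Rightarrow> 'a \<Rightarrow> bool) \<Rightarrow> 'a set \<Rightarrow> 'a \<Rightarrow> 'a \<Rightarrow> bool" where
  "path_in E W x y \<longleftrightarrow> (\<exists>p. is_path E p \<and> hd p = x \<and> last p = y \<and> set p \<subseteq> W)"

definition connected_graph :: "'a set \<Rightarrow> ('a \<Rightarrow> 'a \<Rightarrow> bool) \<Rightarrow> bool" where
  "connected_graph V E \<longleftrightarrow> V \<noteq> {} \<and> (\<forall>x\<in>V. \<forall>y\<in>V. path_in E V x y)"

definition has_cycle :: "('a \<Rightarrow> 'a \<Rightarrow> bool) \<Rightarrow> bool" where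
  "has_cycle E \<longleftrightarrow> (\<exists>p. is_path E p \<and> length p \<ge> 3 \<and> E (last p) (hd p))"

definition subgraph :: "'a set \<Rightarrow> ('a \<Rightarrow> 'a \<Rightarrow> bool) \<Rightarrow> 'a set \<Rightarrow> ('a \<Rightarrow> 'a \<Rightarrow> bool) \<Rightarrow> bool" where
  "subgraph VF EF V E \<longleftrightarrow> simple_graph VF EF \<and> VF \<subseteq> V \<and> (\<forall>x y. EF x y \<longrightarrow> E x y)"

definition forest_in :: "'a set \<Rightarrow> ('a \<Rightarrow> 'a \<Rightarrow> bool) \<Rightarrow> 'a set \<Rightarrow> ('a \<Rightarrow> 'a \<Rightarrow> bool) \<Rightarrow> bool" where
  "forest_in VT ET V E \<longleftrightarrow> subgraph VT ET V E \<and> \<not> has_cycle ET"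

definition is_ray :: "'a set \<Rightarrow> ('a \<Rightarrow> 'a \<Rightarrow> bool) \<Rightarrow> (nat \<Rightarrow> 'a) \<Rightarrow> bool" where
  "is_ray V E r \<longleftrightarrow> inj r \<and> (\<forall>i. r i \<in> V \<and> E (r i) (r (Suc i)))"

definition conn_avoid :: "'a set \<Rightarrow> ('a \<Rightarrow> 'a \<Rightarrow> bool) \<Rightarrow> 'a set \<Rightarrow> 'a \<Rightarrow> 'a \<Rightarrow> bool" where
  "conn_avoid V E S a b \<longleftrightarrow> path_in E (V - S) a b"

definition ray_equiv :: "'a set \<Rightarrow> ('a \<Rightarrow> 'a \<Rightarrow> bool) \<Rightarrow> (nat \<Rightarrow> 'a) \<Rightarrow> (nat \<Rightarrow> 'a) \<Rightarrow> bool" where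
  "ray_equiv V E r r' \<longleftrightarrow> (\<forall>S. finite S \<longrightarrow>
      (\<exists>n. \<forall>i\<ge>n. \<forall>j\<ge>n. conn_avoid V E S (r i) (r' j)))"

definition ends :: "'a set \<Rightarrow> ('a \<Rightarrow> 'a \<Rightarrow> bool) \<Rightarrow> (nat \<Rightarrow> 'a) set set" where
  "ends V E = {{r'. is_ray V E r' \<and> ray_equiv V E r r'} | r. is_ray V E r}"

text \<open>C(S,\<omega>): the component of G - S in which the end \<omega> lives.\<close>
definition end_comp :: "'a set \<Rightarrow> ('a \<Rightarrow> 'a \<Rightarrow> bool) \<Rightarrow> 'a set \<Rightarrow> (nat \<Rightarrow> 'a) set \<Rightarrow> 'a set" where
  "end_comp V E S \<omega> = {x \<in> V - S. \<exists>r\<in>\<omega>. \<exists>n. \<forall>i\<ge>n. conn_avoid V E S (r i) x}"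

text \<open>Points of the 1-complex G are represented by barycentric coordinates:
a vertex v is the indicator of v, an inner point of the edge uv is the function
taking value t at u and 1-t at v (0<t<1). Points of |G| are such functions (Inl)
or ends (Inr).\<close>

definition vpt :: "'a \<Rightarrow> ('a \<Rightarrow> real)" where
  "vpt v = (\<lambda>x. if x = v then 1 else 0)"

definition ept :: "'a \<Rightarrow> 'a \<Rightarrow> real \<Rightarrow> ('a \<Rightarrow> real)" where
  "ept u v t = (\<lambda>x. if x = u then t else if x = v then 1 - t else 0)"

definition vertex_pts :: "'a set \<Rightarrow> ('a \<Rightarrow> real) set" where
  "vertex_pts W = vpt ` W"

definition inner_edge_pts :: "('a \<Rightarrow> 'a \<Rightarrow> bool) \<Rightarrow> ('a \<Rightarrow> real) set" where
  "inner_edge_pts F = {ept u v t | u v t. F u v \<and> 0 < t \<and> t < 1}"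

definition complex_pts :: "'a set \<Rightarrow> ('a \<Rightarrow> 'a \<Rightarrow> bool) \<Rightarrow> ('a \<Rightarrow> real) set" where
  "complex_pts V E = vertex_pts V \<union> inner_edge_pts E"

type_synonym 'a fpoint = "('a \<Rightarrow> real) + (nat \<Rightarrow> 'a) set"

definition supp :: "('a \<Rightarrow> real) \<Rightarrow> 'a set" where
  "supp g = {x. g x \<noteq> 0}"

text \<open>Basic open sets in the 1-complex (locally finite: the sup-distance topology
agrees with the 1-complex topology).\<close>
definition complex_basis :: "'a set \<Rightarrow> ('a \<Rightarrow> 'a \<Rightarrow> bool) \<Rightarrow> 'a fpoint set set" where
  "complex_basis V E = {Inl ` {g \<in> complex_pts V E. \<forall>x. \<bar>f x - g x\<bar> < \<epsilon>} | f \<epsilon>.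
       f \<in> complex_pts V E \<and> \<epsilon> > 0}"

text \<open>Basic open sets around ends: the set C-hat(S,omega) = C(S,\<omega>) together with its ends and
the inner points of edges of G with an endvertex in C(S,\<omega>) (these have their
other endvertex in C(S,\<omega>) or in S).\<close>
definition end_basis :: "'a set \<Rightarrow> ('a \<Rightarrow> 'a \<Rightarrow> bool) \<Rightarrow> 'a fpoint set set" where
  "end_basis V E = {Inl ` {g \<in> complex_pts V E. supp g \<subseteq> C \<union> S \<and> supp g \<inter> C \<noteq> {}}
        \<union> Inr ` {\<omega>' \<in> ends V E. end_comp V E S \<omega>' = C} | S \<omega> C.
       finite S \<and> S \<subseteq> V \<and> \<omega> \<in> ends V E \<and> C = end_comp V E S \<omega>}"

definition Freudenthal :: "'a set \<Rightarrow> ('a \<Rightarrow> 'a \<Rightarrow> bool) \<Rightarrow> 'a fpoint topology" where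
  "Freudenthal V E = topology_generated_by (complex_basis V E \<union> end_basis V E)"

definition subgraph_pts :: "'a set \<Rightarrow> ('a \<Rightarrow> 'a \<Rightarrow> bool) \<Rightarrow> 'a fpoint set" where
  "subgraph_pts VF EF = Inl ` (vertex_pts VF \<union> inner_edge_pts EF)"

definition gclosure :: "'a set \<Rightarrow> ('a \<Rightarrow> 'a \<Rightarrow> bool) \<Rightarrow> 'a set \<Rightarrow> ('a \<Rightarrow> 'a \<Rightarrow> bool) \<Rightarrow> 'a fpoint set" where
  "gclosure V E VF EF = Freudenthal V E closure_of subgraph_pts VF EF"

definition arc_param :: "'b topology \<Rightarrow> 'b set \<Rightarrow> (real \<Rightarrow> 'b) \<Rightarrow> bool" where
  "arc_param X A h \<longleftrightarrow> homeomorphic_map (top_of_set {0..1}) (subtopology X A) h"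

definition is_circle :: "'b topology \<Rightarrow> 'b set \<Rightarrow> bool" where
  "is_circle X C \<longleftrightarrow> C \<subseteq> topspace X \<and>
     (top_of_set (sphere (0::complex) 1)) homeomorphic_space (subtopology X C)"

definition circle_free :: "'b topology \<Rightarrow> 'b set \<Rightarrow> bool" where
  "circle_free X Y \<longleftrightarrow> \<not> (\<exists>C \<subseteq> Y. is_circle X C)"

definition arc_connected_set :: "'b topology \<Rightarrow> 'b set \<Rightarrow> bool" where
  "arc_connected_set X Y \<longleftrightarrow> (\<forall>a\<in>Y. \<forall>b\<in>Y. a \<noteq> b \<longrightarrow>
     (\<exists>A h. A \<subseteq> Y \<and> arc_param X A h \<and> h 0 = a \<and> h 1 = b))"

definition leaves :: "'a set \<Rightarrow> ('a \<Rightarrow> 'a \<Rightarrow> bool) \<Rightarrow> 'a set" where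
  "leaves VT ET = {v \<in> VT. card (nbhd ET v) = 1}"

definition spine_V :: "'a set \<Rightarrow> ('a \<Rightarrow> 'a \<Rightarrow> bool) \<Rightarrow> 'a set" where
  "spine_V VT ET = VT - leaves VT ET"

definition spine_E :: "'a set \<Rightarrow> ('a \<Rightarrow> 'a \<Rightarrow> bool) \<Rightarrow> ('a \<Rightarrow> 'a \<Rightarrow> bool)" where
  "spine_E VT ET = (\<lambda>x y. ET x y \<and> x \<notin> leaves VT ET \<and> y \<notin> leaves VT ET)"

text \<open>\<open>top_caterpillar V E VT ET h\<close>: the closure of the forest T=(VT,ET) is a
topological caterpillar of G and h parametrises the arc A = closure of T - L.\<close>
definition top_caterpillar ::
  "'a set \<Rightarrow> ('a \<Rightarrow> 'a \<Rightarrow> bool) \<Rightarrow> 'a set \<Rightarrow> ('a \<Rightarrow> 'a \<Rightarrow> bool) \<Rightarrow> (real \<Rightarrow> 'a fpoint) \<Rightarrow> bool" where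
  "top_caterpillar V E VT ET h \<longleftrightarrow> forest_in VT ET V E
     \<and> circle_free (Freudenthal V E) (gclosure V E VT ET)
     \<and> arc_connected_set (Freudenthal V E) (gclosure V E VT ET)
     \<and> arc_param (Freudenthal V E) (gclosure V E (spine_V VT ET) (spine_E VT ET)) h"

definition arc_pos :: "(real \<Rightarrow> 'a fpoint) \<Rightarrow> 'a \<Rightarrow> real" where
  "arc_pos h u = inv_into {0..1} h (Inl (vpt u))"

definition lessA :: "'a set \<Rightarrow> ('a \<Rightarrow> 'a \<Rightarrow> bool) \<Rightarrow> (real \<Rightarrow> 'a fpoint) \<Rightarrow> 'a \<Rightarrow> 'a \<Rightarrow> bool" where
  "lessA VT ET h u u' \<longleftrightarrow> u \<in> spine_V VT ET \<and> u' \<in> spine_V VT ET \<and> arc_pos h u < arc_pos h u'"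

definition consecA :: "'a set \<Rightarrow> ('a \<Rightarrow> 'a \<Rightarrow> bool) \<Rightarrow> (real \<Rightarrow> 'a fpoint) \<Rightarrow> 'a \<Rightarrow> 'a \<Rightarrow> bool" where
  "consecA VT ET h v' w' \<longleftrightarrow> lessA VT ET h v' w' \<and> \<not> (\<exists>u. lessA VT ET h v' u \<and> lessA VT ET h u w')"

definition maxA :: "'a set \<Rightarrow> ('a \<Rightarrow> 'a \<Rightarrow> bool) \<Rightarrow> (real \<Rightarrow> 'a fpoint) \<Rightarrow> 'a \<Rightarrow> bool" where
  "maxA VT ET h m \<longleftrightarrow> m \<in> spine_V VT ET \<and> \<not> (\<exists>u. lessA VT ET h m u)"

definition minA :: "'a set \<Rightarrow> ('a \<Rightarrow> 'a \<Rightarrow> bool) \<Rightarrow> (real \<Rightarrow> 'a fpoint) \<Rightarrow> 'a \<Rightarrow> bool" where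
  "minA VT ET h s \<longleftrightarrow> s \<in> spine_V VT ET \<and> \<not> (\<exists>u. lessA VT ET h u s)"

definition partT :: "'a set \<Rightarrow> ('a \<Rightarrow> 'a \<Rightarrow> bool) \<Rightarrow> (real \<Rightarrow> 'a fpoint) \<Rightarrow> 'a set set" where
  "partT VT ET h =
     {insert w' (nbhd ET v' \<inter> leaves VT ET) | v' w'. consecA VT ET h v' w'}
   \<union> {nbhd ET m \<inter> leaves VT ET | m. maxA VT ET h m}
   \<union> {{s} | s. minA VT ET h s}"

definition clsT :: "'a set \<Rightarrow> ('a \<Rightarrow> 'a \<Rightarrow> bool) \<Rightarrow> (real \<Rightarrow> 'a fpoint) \<Rightarrow> 'a \<Rightarrow> 'a set" where
  "clsT VT ET h u = (THE P. P \<in> partT VT ET h \<and> u \<in> P)"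

definition lessT :: "'a set \<Rightarrow> ('a \<Rightarrow> 'a \<Rightarrow> bool) \<Rightarrow> (real \<Rightarrow> 'a fpoint) \<Rightarrow> 'a set \<Rightarrow> 'a set \<Rightarrow> bool" where
  "lessT VT ET h P Q \<longleftrightarrow>
     (\<exists>v' w'. lessA VT ET h v' w' \<and> P = clsT VT ET h v' \<and> Q = clsT VT ET h w')
   \<or> (\<exists>s. minA VT ET h s \<and> P = {s} \<and> Q \<in> partT VT ET h \<and> Q \<noteq> P)
   \<or> (\<exists>m. maxA VT ET h m \<and> Q = nbhd ET m \<inter> leaves VT ET \<and> P \<in> partT VT ET h \<and> P \<noteq> Q)"

definition leT :: "'a set \<Rightarrow> ('a \<Rightarrow> 'a \<Rightarrow> bool) \<Rightarrow> (real \<Rightarrow> 'a fpoint) \<Rightarrow> 'a set \<Rightarrow> 'a set \<Rightarrow> bool" where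
  "leT VT ET h P Q \<longleftrightarrow> lessT VT ET h P Q \<or> P = Q"

definition interval_I :: "'a set \<Rightarrow> ('a \<Rightarrow> 'a \<Rightarrow> bool) \<Rightarrow> (real \<Rightarrow> 'a fpoint) \<Rightarrow> 'a \<Rightarrow> 'a \<Rightarrow> 'a set" where
  "interval_I VT ET h v w = \<Union> {clsT VT ET h u | u. u \<in> VT \<and>
       leT VT ET h (clsT VT ET h v) (clsT VT ET h u) \<and> leT VT ET h (clsT VT ET h u) (clsT VT ET h w)}"

end

theory Submission
  imports Defs "HOL-Analysis.Analysis"
begin

definition RW :: "('a \<Rightarrow> 'a \<Rightarrow> bool) \<Rightarrow> 'a set \<Rightarrow> 'a \<Rightarrow> 'a \<Rightarrow> bool" where
  "RW E W = (\<lambda>u v. E u v \<and> u \<in> W \<and> v \<in> W)"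

lemma path_imp_rtc:
  assumes "is_path E p" "set p \<subseteq> W"
  shows "\<forall>i<length p. (RW E W)\<^sup>*\<^sup>* (hd p) (p ! i)"
proof (intro allI impI)
  fix i assume "i < length p"
  then show "(RW E W)\<^sup>*\<^sup>* (hd p) (p ! i)"
  proof (induction i)
    case 0
    then show ?case using assms by (simp add: hd_conv_nth is_path_def)
  next
    case (Suc i)
    then have "(RW E W)\<^sup>*\<^sup>* (hd p) (p ! i)" by simp
    moreover have "RW E W (p ! i) (p ! Suc i)"
      using Suc.prems assms unfolding RW_def is_path_def
      by (auto dest: nth_mem)
    ultimately show ?case by (rule rtranclp.rtrancl_into_rtrancl)
  qed
qed

lemma rtc_imp_path:
  assumes "(RW E W)\<^sup>*\<^sup>* a b" "a \<in> W"
  shows "path_in E W a b"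
  using assms
proof (induction rule: rtranclp_induct)
  case base
  then show ?case unfolding path_in_def is_path_def
    by (intro exI[of _ "[a]"]) auto
next
  case (step m n)
  then obtain p where p: "is_path E p" "hd p = a" "last p = m" "set p \<subseteq> W"
    unfolding path_in_def by auto
  have En: "E m n" "n \<in> W" using step(2) unfolding RW_def by auto
  show ?case
  proof (cases "n \<in> set p")
    case True
    then obtain k where k: "k < length p" "p ! k = n" by (meson in_set_conv_nth)
    define q where "q = take (Suc k) p"
    have "q \<noteq> []" using k p(1) unfolding q_def is_path_def by auto
    moreover have "distinct q" using p(1) unfolding q_def is_path_def by auto
    moreover have "\<forall>i. Suc i < length q \<longrightarrow> E (q ! i) (q ! Suc i)"
      using p(1) k unfolding q_def is_path_def by auto
    moreover have "hd q = a" using p k unfolding q_def is_path_def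
      by (metis hd_take zero_less_Suc)
    moreover have "last q = n" using k unfolding q_def
      by (simp add: take_Suc_conv_app_nth)
    moreover have "set q \<subseteq> W" using p(4) unfolding q_def by (meson order_trans set_take_subset)
    ultimately show ?thesis unfolding path_in_def is_path_def by blast
  next
    case False
    define q where "q = p @ [n]"
    have "p \<noteq> []" using p(1) unfolding is_path_def by auto
    have "\<forall>i. Suc i < length q \<longrightarrow> E (q ! i) (q ! Suc i)"
    proof (intro allI impI)
      fix i assume i: "Suc i < length q"
      show "E (q ! i) (q ! Suc i)"
      proof (cases "Suc i < length p")
        case True
        then show ?thesis using p(1) unfolding q_def is_path_def by (auto simp: nth_append)
      next
        case False
        then have "Suc i = length p" using i unfolding q_def by auto
        then have ii: "i = length p - 1" by simp
        then have "q ! i = last p" "q ! Suc i = n" using \<open>p \<noteq> []\<close> \<open>Suc i = length p\<close> unfolding q_def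
          by (auto simp: nth_append last_conv_nth)
        then show ?thesis using En p(3) by simp
      qed
    qed
    moreover have "distinct q" using p(1) False unfolding q_def is_path_def by auto
    moreover have "hd q = a" using p \<open>p \<noteq> []\<close> unfolding q_def by auto
    moreover have "last q = n" "q \<noteq> []" "set q \<subseteq> W" using p En unfolding q_def by auto
    ultimately show ?thesis unfolding path_in_def is_path_def by blast
  qed
qed

lemma path_in_iff: "path_in E W a b \<longleftrightarrow> a \<in> W \<and> (RW E W)\<^sup>*\<^sup>* a b"
proof
  assume "path_in E W a b"
  then obtain p where p: "is_path E p" "hd p = a" "last p = b" "set p \<subseteq> W"
    unfolding path_in_def by auto
  have "p \<noteq> []" using p(1) unfolding is_path_def by auto
  then have "a \<in> W" using p by (metis hd_in_set subsetD)
  moreover have "(RW E W)\<^sup>*\<^sup>* a b"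
    using path_imp_rtc[OF p(1) p(4)] p \<open>p \<noteq> []\<close>
    by (metis diff_less last_conv_nth length_greater_0_conv zero_less_one)
  ultimately show "a \<in> W \<and> (RW E W)\<^sup>*\<^sup>* a b" by simp
next
  assume "a \<in> W \<and> (RW E W)\<^sup>*\<^sup>* a b"
  then show "path_in E W a b" using rtc_imp_path by metis
qed

lemma rtc_target: "(RW E W)\<^sup>*\<^sup>* a b \<Longrightarrow> a \<in> W \<Longrightarrow> b \<in> W"
  by (induction rule: rtranclp_induct) (auto simp: RW_def)

lemma path_in_last: "path_in E W a b \<Longrightarrow> b \<in> W"
  using path_in_iff rtc_target by metis

lemma path_in_trans: "path_in E W a b \<Longrightarrow> path_in E W b c \<Longrightarrow> path_in E W a c"
  unfolding path_in_iff by auto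

lemma path_in_refl: "a \<in> W \<Longrightarrow> path_in E W a a"
  unfolding path_in_iff by auto

lemma path_in_step: "path_in E W a b \<Longrightarrow> E b c \<Longrightarrow> c \<in> W \<Longrightarrow> path_in E W a c"
  unfolding path_in_iff by (metis RW_def rtc_target rtranclp.rtrancl_into_rtrancl)

lemma path_in_edge: "E a b \<Longrightarrow> a \<in> W \<Longrightarrow> b \<in> W \<Longrightarrow> path_in E W a b"
  using path_in_refl path_in_step by metis

lemma path_in_sym:
  assumes "\<And>x y. E x y \<Longrightarrow> E y x" "path_in E W a b"
  shows "path_in E W b a"
proof -
  have "(RW E W)\<^sup>*\<^sup>* a b" "a \<in> W" using assms(2) unfolding path_in_iff by auto
  then have "(RW E W)\<^sup>*\<^sup>* b a"
  proof (induction rule: rtranclp_induct)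
    case base then show ?case by simp
  next
    case (step m n)
    have "RW E W n m" using step(2) assms(1) unfolding RW_def by auto
    then show ?case using step by (meson converse_rtranclp_into_rtranclp)
  qed
  then show ?thesis unfolding path_in_iff using rtc_target \<open>a \<in> W\<close> assms(2) path_in_last by metis
qed

lemma path_in_mono: "path_in E W a b \<Longrightarrow> W \<subseteq> W' \<Longrightarrow> path_in E W' a b"
  unfolding path_in_def by blast


locale sgraph =
  fixes V :: "'a set" and E :: "'a \<Rightarrow> 'a \<Rightarrow> bool"
  assumes sg: "simple_graph V E"
begin

lemma E_sym: "E x y \<Longrightarrow> E y x" using sg unfolding simple_graph_def by blast
lemma E_V: "E x y \<Longrightarrow> x \<in> V \<and> y \<in> V" using sg unfolding simple_graph_def by blast
lemma E_irr: "E x y \<Longrightarrow> x \<noteq> y" using sg unfolding simple_graph_def by blast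

lemma ray_tail:
  assumes "is_ray V E r" "finite S"
  shows "\<exists>n. \<forall>i\<ge>n. r i \<notin> S"
proof -
  have "inj r" using assms unfolding is_ray_def by auto
  then have "finite (r -` S)" using assms(2) by (simp add: finite_vimageI)
  then obtain n where n: "\<forall>i\<in>r -` S. i < n"
    using finite_nat_set_iff_bounded by blast
  have "\<forall>i\<ge>n. r i \<notin> S"
  proof (intro allI impI)
    fix i assume "n \<le> i" show "r i \<notin> S"
    proof
      assume "r i \<in> S" then have "i < n" using n by blast
      then show False using \<open>n \<le> i\<close> by simp
    qed
  qed
  then show ?thesis by blast
qed

lemma ray_conn:
  assumes "is_ray V E r" "\<forall>i\<ge>n. r i \<notin> S"
  shows "\<forall>i\<ge>n. \<forall>j\<ge>n. conn_avoid V E S (r i) (r j)"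
proof -
  have base: "(RW E (V - S))\<^sup>*\<^sup>* (r n) (r (n + k))" for k
  proof (induction k)
    case 0 then show ?case by simp
  next
    case (Suc k)
    have "E (r (n + k)) (r (Suc (n + k)))" "r (n + k) \<in> V" "r (Suc (n + k)) \<in> V"
      using assms(1) unfolding is_ray_def by blast+
    moreover have "r (n + k) \<notin> S" "r (Suc (n + k)) \<notin> S" using assms(2) by simp_all
    ultimately have "RW E (V - S) (r (n + k)) (r (n + Suc k))"
      unfolding RW_def by simp
    then show ?case using rtranclp.rtrancl_into_rtrancl[OF Suc.IH] by simp
  qed
  have rn: "r n \<in> V - S" using assms unfolding is_ray_def by blast
  have p: "path_in E (V - S) (r n) (r i)" if "i \<ge> n" for i
    using base[of "i - n"] that rn unfolding path_in_iff by simp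
  show ?thesis unfolding conn_avoid_def
  proof (intro allI impI)
    fix i j assume "n \<le> i" "n \<le> j"
    have "path_in E (V - S) (r i) (r n)" using path_in_sym[OF E_sym p[OF \<open>n \<le> i\<close>]] .
    then show "path_in E (V - S) (r i) (r j)" using path_in_trans p[OF \<open>n \<le> j\<close>] by metis
  qed
qed

lemma ends_rep:
  assumes "\<omega> \<in> ends V E"
  obtains r0 where "is_ray V E r0" "\<omega> = {r'. is_ray V E r' \<and> ray_equiv V E r0 r'}"
  using assms unfolding ends_def by auto

lemma ray_equiv_refl:
  assumes "is_ray V E r" shows "ray_equiv V E r r"
  unfolding ray_equiv_def
proof (intro allI impI)
  fix S :: "'a set" assume "finite S"
  then obtain n where "\<forall>i\<ge>n. r i \<notin> S" using ray_tail assms by blast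
  then show "\<exists>n. \<forall>i\<ge>n. \<forall>j\<ge>n. conn_avoid V E S (r i) (r j)" using ray_conn assms by blast
qed

lemma end_comp_sub: "end_comp V E S \<omega> \<subseteq> V - S"
  unfolding end_comp_def by auto

lemma end_comp_nonempty:
  assumes "\<omega> \<in> ends V E" "finite S"
  shows "end_comp V E S \<omega> \<noteq> {}"
proof -
  obtain r0 where r0: "is_ray V E r0" "\<omega> = {r'. is_ray V E r' \<and> ray_equiv V E r0 r'}"
    using ends_rep assms by blast
  have "r0 \<in> \<omega>" using r0 ray_equiv_refl by auto
  obtain n where n: "\<forall>i\<ge>n. r0 i \<notin> S" using ray_tail r0 assms by blast
  have c: "\<forall>i\<ge>n. conn_avoid V E S (r0 i) (r0 n)" using ray_conn[OF r0(1) n] by blast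
  have "r0 n \<in> V" using r0(1) unfolding is_ray_def by blast
  then have "r0 n \<in> V - S" using n by blast
  then have "r0 n \<in> end_comp V E S \<omega>"
    unfolding end_comp_def using c \<open>r0 \<in> \<omega>\<close> by blast
  then show ?thesis by auto
qed

lemma end_comp_step:
  assumes "c \<in> end_comp V E S \<omega>" "E c d" "d \<notin> S"
  shows "d \<in> end_comp V E S \<omega>"
proof -
  have d: "d \<in> V - S" using assms E_V by auto
  obtain r n where r: "r \<in> \<omega>" "\<forall>i\<ge>n. conn_avoid V E S (r i) c"
    using assms(1) unfolding end_comp_def by auto
  have "\<forall>i\<ge>n. conn_avoid V E S (r i) d"
  proof (intro allI impI)
    fix i assume "n \<le> i"
    then have "path_in E (V - S) (r i) c" using r(2) unfolding conn_avoid_def by simp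
    then show "conn_avoid V E S (r i) d" unfolding conn_avoid_def
      using path_in_step[of E "V - S" "r i" c d] assms(2) d by simp
  qed
  then show ?thesis unfolding end_comp_def using d r(1) by auto
qed

lemma end_comp_mono:
  assumes "S \<subseteq> S'"
  shows "end_comp V E S' \<omega> \<subseteq> end_comp V E S \<omega>"
proof
  fix x assume "x \<in> end_comp V E S' \<omega>"
  then obtain r n where "x \<in> V - S'" "r \<in> \<omega>" "\<forall>i\<ge>n. path_in E (V - S') (r i) x"
    unfolding end_comp_def conn_avoid_def by auto
  moreover have "V - S' \<subseteq> V - S" using assms by auto
  ultimately have "x \<in> V - S" "\<forall>i\<ge>n. path_in E (V - S) (r i) x"
    using path_in_mono[of E "V - S'" _ _ "V - S"] by auto
  then show "x \<in> end_comp V E S \<omega>" unfolding end_comp_def conn_avoid_def using \<open>r \<in> \<omega>\<close> by auto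
qed

lemma end_comp_conn:
  assumes "\<omega> \<in> ends V E" "finite S" "c \<in> end_comp V E S \<omega>" "d \<in> end_comp V E S \<omega>"
  shows "conn_avoid V E S c d"
proof -
  obtain r0 where r0: "is_ray V E r0" "\<omega> = {r'. is_ray V E r' \<and> ray_equiv V E r0 r'}"
    using ends_rep assms by blast
  obtain r1 n1 where r1: "r1 \<in> \<omega>" "\<forall>i\<ge>n1. conn_avoid V E S (r1 i) c"
    using assms(3) unfolding end_comp_def by auto
  obtain r2 n2 where r2: "r2 \<in> \<omega>" "\<forall>i\<ge>n2. conn_avoid V E S (r2 i) d"
    using assms(4) unfolding end_comp_def by auto
  obtain m1 where m1: "\<forall>i\<ge>m1. \<forall>j\<ge>m1. conn_avoid V E S (r0 i) (r1 j)"
    using r1(1) r0(2) assms(2) unfolding ray_equiv_def by auto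
  obtain m2 where m2: "\<forall>i\<ge>m2. \<forall>j\<ge>m2. conn_avoid V E S (r0 i) (r2 j)"
    using r2(1) r0(2) assms(2) unfolding ray_equiv_def by auto
  define N where "N = max (max n1 n2) (max m1 m2)"
  have N: "n1 \<le> N" "n2 \<le> N" "m1 \<le> N" "m2 \<le> N" unfolding N_def by auto
  have 1: "path_in E (V - S) c (r1 N)"
    using path_in_sym[of E "V - S" "r1 N" c, OF E_sym] r1(2) N(1) unfolding conn_avoid_def by blast
  have 2: "path_in E (V - S) (r1 N) (r0 N)"
    using path_in_sym[of E "V - S" "r0 N" "r1 N", OF E_sym] m1 N(3) unfolding conn_avoid_def by blast
  have 3: "path_in E (V - S) (r0 N) (r2 N)" using m2 N(4) unfolding conn_avoid_def by blast
  have 4: "path_in E (V - S) (r2 N) d" using r2(2) N(2) unfolding conn_avoid_def by blast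
  show ?thesis using path_in_trans[OF path_in_trans[OF path_in_trans[OF 1 2] 3] 4]
    unfolding conn_avoid_def .
qed

lemma end_comp_eq:
  assumes "\<omega>1 \<in> ends V E" "\<omega>2 \<in> ends V E" "finite S"
    "z \<in> end_comp V E S \<omega>1" "z \<in> end_comp V E S \<omega>2"
  shows "end_comp V E S \<omega>1 = end_comp V E S \<omega>2"
proof -
  have sub: "end_comp V E S a \<subseteq> end_comp V E S b"
    if ha: "a \<in> ends V E" and hb: "b \<in> ends V E" and hza: "z \<in> end_comp V E S a"
      and hzb: "z \<in> end_comp V E S b" for a b
  proof
    fix y assume y: "y \<in> end_comp V E S a"
    have zy: "conn_avoid V E S z y" using end_comp_conn[OF ha assms(3) hza y] .
    obtain r n where r: "r \<in> b" "\<forall>i\<ge>n. conn_avoid V E S (r i) z"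
      using hzb unfolding end_comp_def by auto
    have "\<forall>i\<ge>n. conn_avoid V E S (r i) y"
    proof (intro allI impI)
      fix i assume "n \<le> i"
      then have "path_in E (V - S) (r i) z" using r(2) unfolding conn_avoid_def by simp
      then show "conn_avoid V E S (r i) y"
        using path_in_trans[of E "V - S" "r i" z y] zy unfolding conn_avoid_def by blast
    qed
    then show "y \<in> end_comp V E S b" using y r(1) unfolding end_comp_def by auto
  qed
  show ?thesis using sub assms by blast
qed

lemma end_comp_inner:
  assumes "c \<in> end_comp V E S \<omega>" "conn_avoid V E S c d"
  shows "(RW E (end_comp V E S \<omega>))\<^sup>*\<^sup>* c d"
proof -
  have "(RW E (V - S))\<^sup>*\<^sup>* c d" using assms(2) unfolding conn_avoid_def path_in_iff by auto
  then show ?thesis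
  proof (induction rule: rtranclp_induct)
    case base then show ?case by simp
  next
    case (step m n)
    have "m \<in> end_comp V E S \<omega>"
      using step.IH assms(1) rtc_target[of E "end_comp V E S \<omega>" c m] by blast
    moreover have "E m n" "n \<notin> S" using step(2) unfolding RW_def by auto
    ultimately have "n \<in> end_comp V E S \<omega>" using end_comp_step by blast
    then have "RW E (end_comp V E S \<omega>) m n" using \<open>m \<in> _\<close> \<open>E m n\<close> unfolding RW_def by auto
    then show ?case using rtranclp.rtrancl_into_rtrancl[OF step.IH] by blast
  qed
qed

end


definition ballp :: "'a set \<Rightarrow> ('a \<Rightarrow> 'a \<Rightarrow> bool) \<Rightarrow> ('a \<Rightarrow> real) \<Rightarrow> real \<Rightarrow> 'a fpoint set" where
  "ballp V E f e = Inl ` {g \<in> complex_pts V E. \<forall>x. \<bar>f x - g x\<bar> < e}"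

definition EB :: "'a set \<Rightarrow> ('a \<Rightarrow> 'a \<Rightarrow> bool) \<Rightarrow> 'a set \<Rightarrow> (nat \<Rightarrow> 'a) set \<Rightarrow> 'a fpoint set" where
  "EB V E S \<omega> = Inl ` {g \<in> complex_pts V E. supp g \<subseteq> end_comp V E S \<omega> \<union> S \<and> supp g \<inter> end_comp V E S \<omega> \<noteq> {}}
      \<union> Inr ` {\<omega>' \<in> ends V E. end_comp V E S \<omega>' = end_comp V E S \<omega>}"

definition Pts :: "'a set \<Rightarrow> ('a \<Rightarrow> 'a \<Rightarrow> bool) \<Rightarrow> 'a set \<Rightarrow> 'a fpoint set" where
  "Pts V E F = Inl ` {g \<in> complex_pts V E. supp g \<subseteq> F}"

definition oedge :: "'a \<Rightarrow> 'a \<Rightarrow> 'a fpoint set" where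
  "oedge u z = Inl ` {ept u z t | t. 0 < t \<and> t < 1}"

lemma supp_vpt[simp]: "supp (vpt u) = {u}"
  unfolding supp_def vpt_def by auto

lemma supp_ept: "u \<noteq> z \<Longrightarrow> 0 < s \<Longrightarrow> s < 1 \<Longrightarrow> supp (ept u z s) = {u, z}"
  unfolding supp_def ept_def by auto

lemma ept_swap: "u \<noteq> z \<Longrightarrow> ept u z s = ept z u (1 - s)"
  unfolding ept_def by (rule ext) auto

lemma vpt_ne_ept: "u \<noteq> z \<Longrightarrow> 0 < s \<Longrightarrow> s < 1 \<Longrightarrow> vpt w \<noteq> ept u z s"
proof
  assume "u \<noteq> z" "0 < s" "s < 1" "vpt w = ept u z s"
  then have "supp (vpt w) = {u, z}" using supp_ept by metis
  then show False using \<open>u \<noteq> z\<close> by simp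
qed

lemma vpt_inj: "vpt u = vpt w \<Longrightarrow> u = w"
  by (metis insert_eq_iff supp_vpt singleton_insert_inj_eq)

context sgraph
begin

abbreviation "X \<equiv> Freudenthal V E"

lemma complex_pts_cases:
  assumes "g \<in> complex_pts V E"
  obtains (vert) u where "u \<in> V" "g = vpt u"
  | (edge) u z s where "E u z" "0 < s" "s < 1" "g = ept u z s"
  using assms unfolding complex_pts_def vertex_pts_def inner_edge_pts_def by auto

lemma supp_complex:
  assumes "g \<in> complex_pts V E"
  shows "(\<exists>u\<in>V. supp g = {u}) \<or> (\<exists>u z. E u z \<and> supp g = {u, z})"
  using assms
proof (cases rule: complex_pts_cases)
  case (vert u) then show ?thesis by auto
next
  case (edge u z s) then show ?thesis using supp_ept E_irr by metis
qed

lemma supp_complex_V: "g \<in> complex_pts V E \<Longrightarrow> supp g \<subseteq> V"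
proof -
  assume "g \<in> complex_pts V E"
  from supp_complex[OF this] show ?thesis
  proof
    assume "\<exists>u\<in>V. supp g = {u}" then show ?thesis by auto
  next
    assume "\<exists>u z. E u z \<and> supp g = {u, z}"
    then obtain u z where "E u z" "supp g = {u, z}" by blast
    then show ?thesis using E_V[of u z] by auto
  qed
qed

lemma openin_ballp: "f \<in> complex_pts V E \<Longrightarrow> e > 0 \<Longrightarrow> openin X (ballp V E f e)"
  unfolding Freudenthal_def ballp_def
  by (rule topology_generated_by_Basis) (auto simp: complex_basis_def)

lemma center_in_ballp: "f \<in> complex_pts V E \<Longrightarrow> e > 0 \<Longrightarrow> Inl f \<in> ballp V E f e"
  unfolding ballp_def by auto

lemma EB_in_basis:
  assumes "finite S" "S \<subseteq> V" "\<omega> \<in> ends V E"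
  shows "EB V E S \<omega> \<in> end_basis V E"
  unfolding end_basis_def EB_def using assms by blast

lemma openin_EB: "finite S \<Longrightarrow> S \<subseteq> V \<Longrightarrow> \<omega> \<in> ends V E \<Longrightarrow> openin X (EB V E S \<omega>)"
  unfolding Freudenthal_def by (rule topology_generated_by_Basis) (use EB_in_basis in blast)

lemma Inr_in_EB: "\<omega> \<in> ends V E \<Longrightarrow> Inr \<omega> \<in> EB V E S \<omega>"
  unfolding EB_def by auto

lemma topspace_X: "topspace X = \<Union>(complex_basis V E \<union> end_basis V E)"
  unfolding Freudenthal_def by simp

lemma topspace_cases:
  assumes "p \<in> topspace X"
  obtains (inl) g where "g \<in> complex_pts V E" "p = Inl g"
  | (inr) \<omega> where "\<omega> \<in> ends V E" "p = Inr \<omega>"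
  using assms unfolding topspace_X complex_basis_def end_basis_def by auto

lemma Inl_topspace: "g \<in> complex_pts V E \<Longrightarrow> Inl g \<in> topspace X"
  using openin_ballp[of g 1] center_in_ballp[of g 1] openin_subset by fastforce

lemma Inr_topspace: "\<omega> \<in> ends V E \<Longrightarrow> Inr \<omega> \<in> topspace X"
  using openin_EB[of "{}" \<omega>] Inr_in_EB[of \<omega> "{}"] openin_subset by fastforce

lemma EB_mono:
  assumes "\<omega> \<in> ends V E" "finite S" "finite S'"
  shows "EB V E (S \<union> S') \<omega> \<subseteq> EB V E S \<omega>"
proof -
  let ?C = "end_comp V E S \<omega>" and ?C' = "end_comp V E (S \<union> S') \<omega>"
  have CC: "?C' \<subseteq> ?C" using end_comp_mono[of S "S \<union> S'"] by blast
  have inl: "supp g \<subseteq> ?C \<union> S \<and> supp g \<inter> ?C \<noteq> {}"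
    if g: "g \<in> complex_pts V E" "supp g \<subseteq> ?C' \<union> (S \<union> S')" "supp g \<inter> ?C' \<noteq> {}" for g
  proof -
    have "supp g \<inter> ?C \<noteq> {}" using g(3) CC by blast
    moreover have "supp g \<subseteq> ?C \<union> S"
    proof
      fix b assume b: "b \<in> supp g"
      show "b \<in> ?C \<union> S"
      proof (cases "b \<in> ?C' \<or> b \<in> S")
        case True then show ?thesis using CC by blast
      next
        case False
        obtain a where a: "a \<in> supp g" "a \<in> ?C'" using g(3) by blast
        from supp_complex[OF g(1)] show ?thesis
        proof
          assume "\<exists>u\<in>V. supp g = {u}"
          then show ?thesis using a b False by auto
        next
          assume "\<exists>u z. E u z \<and> supp g = {u, z}"
          then obtain u z where uz: "E u z" "supp g = {u, z}" by blast
          have "a \<noteq> b" using a(2) False by blast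
          then have "(a = u \<and> b = z) \<or> (a = z \<and> b = u)" using uz(2) a(1) b by auto
          then have "E a b" using uz(1) E_sym by blast
          moreover have "a \<in> ?C" using a(2) CC by blast
          moreover have "b \<notin> S" using False by blast
          ultimately have "b \<in> ?C" using end_comp_step by blast
          then show ?thesis by blast
        qed
      qed
    qed
    ultimately show ?thesis by blast
  qed
  have inr: "end_comp V E S \<omega>' = ?C"
    if w: "\<omega>' \<in> ends V E" "end_comp V E (S \<union> S') \<omega>' = ?C'" for \<omega>'
  proof -
    have "finite (S \<union> S')" using assms(2,3) by simp
    then obtain c where c: "c \<in> ?C'" using end_comp_nonempty[OF assms(1)] by blast
    have "c \<in> end_comp V E S \<omega>'" using c w(2) end_comp_mono[of S "S \<union> S'" \<omega>'] by blast
    moreover have "c \<in> ?C" using c CC by blast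
    ultimately show ?thesis using end_comp_eq[OF w(1) assms(1) assms(2)] by blast
  qed
  show ?thesis
  proof
    fix p assume "p \<in> EB V E (S \<union> S') \<omega>"
    then consider (l) g where "p = Inl g" "g \<in> complex_pts V E" "supp g \<subseteq> ?C' \<union> (S \<union> S')" "supp g \<inter> ?C' \<noteq> {}"
      | (r) \<omega>' where "p = Inr \<omega>'" "\<omega>' \<in> ends V E" "end_comp V E (S \<union> S') \<omega>' = ?C'"
      unfolding EB_def by blast
    then show "p \<in> EB V E S \<omega>"
    proof cases
      case l
      then have "supp g \<subseteq> ?C \<union> S \<and> supp g \<inter> ?C \<noteq> {}" using inl by blast
      then show ?thesis unfolding EB_def using l(1,2) by blast
    next
      case r
      then have "end_comp V E S \<omega>' = ?C" using inr by blast
      then show ?thesis unfolding EB_def using r(1,2) by blast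
    qed
  qed
qed


lemma end_nbhd_aux:
  assumes "generate_topology_on (complex_basis V E \<union> end_basis V E) U"
  shows "\<forall>\<omega>. Inr \<omega> \<in> U \<longrightarrow> \<omega> \<in> ends V E \<longrightarrow> (\<exists>S. finite S \<and> S \<subseteq> V \<and> EB V E S \<omega> \<subseteq> U)"
  using assms
proof (induction rule: generate_topology_on.induct)
  case Empty then show ?case by simp
next
  case (Int a b)
  show ?case
  proof (intro allI impI)
    fix \<omega> assume w: "Inr \<omega> \<in> a \<inter> b" "\<omega> \<in> ends V E"
    have wa: "Inr \<omega> \<in> a" and wb: "Inr \<omega> \<in> b" using w(1) by simp_all
    have "\<exists>S. finite S \<and> S \<subseteq> V \<and> EB V E S \<omega> \<subseteq> a" using Int.IH(1) wa w(2) by simp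
    then obtain S1 where S1: "finite S1" "S1 \<subseteq> V" "EB V E S1 \<omega> \<subseteq> a" by (elim exE conjE)
    have "\<exists>S. finite S \<and> S \<subseteq> V \<and> EB V E S \<omega> \<subseteq> b" using Int.IH(2) wb w(2) by simp
    then obtain S2 where S2: "finite S2" "S2 \<subseteq> V" "EB V E S2 \<omega> \<subseteq> b" by (elim exE conjE)
    have 1: "EB V E (S1 \<union> S2) \<omega> \<subseteq> a" using EB_mono[OF w(2) S1(1) S2(1)] S1(3) by (rule order_trans)
    have "S2 \<union> S1 = S1 \<union> S2" by (rule Un_commute)
    then have 2: "EB V E (S1 \<union> S2) \<omega> \<subseteq> b" using EB_mono[OF w(2) S2(1) S1(1)] S2(3) by simp
    have "finite (S1 \<union> S2)" "S1 \<union> S2 \<subseteq> V" using S1 S2 by simp_all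
    then show "\<exists>S. finite S \<and> S \<subseteq> V \<and> EB V E S \<omega> \<subseteq> a \<inter> b"
      using 1 2 by blast
  qed
next
  case (UN K)
  show ?case
  proof (intro allI impI)
    fix \<omega> assume w: "Inr \<omega> \<in> \<Union>K" "\<omega> \<in> ends V E"
    obtain k where k: "k \<in> K" "Inr \<omega> \<in> k" using w(1) by blast
    have "\<forall>\<omega>. Inr \<omega> \<in> k \<longrightarrow> \<omega> \<in> ends V E \<longrightarrow> (\<exists>S. finite S \<and> S \<subseteq> V \<and> EB V E S \<omega> \<subseteq> k)"
      by (rule UN.IH[OF k(1)])
    then have "\<exists>S. finite S \<and> S \<subseteq> V \<and> EB V E S \<omega> \<subseteq> k" using k(2) w(2) by simp
    then obtain S where S: "finite S" "S \<subseteq> V" "EB V E S \<omega> \<subseteq> k" by (elim exE conjE)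
    have "k \<subseteq> \<Union>K" using k(1) by (rule Union_upper)
    then have "EB V E S \<omega> \<subseteq> \<Union>K" using S(3) by simp
    then show "\<exists>S. finite S \<and> S \<subseteq> V \<and> EB V E S \<omega> \<subseteq> \<Union>K" using S(1,2) by blast
  qed
next
  case (Basis s)
  show ?case
  proof (intro allI impI)
    fix \<omega> assume w: "Inr \<omega> \<in> s" "\<omega> \<in> ends V E"
    have "s \<notin> complex_basis V E" using w(1) unfolding complex_basis_def by auto
    then have "s \<in> end_basis V E" using Basis by blast
    then obtain S0 \<omega>0 C where S0': "finite S0" "S0 \<subseteq> V" "\<omega>0 \<in> ends V E"
      "C = end_comp V E S0 \<omega>0"
      "s = Inl ` {g \<in> complex_pts V E. supp g \<subseteq> C \<union> S0 \<and> supp g \<inter> C \<noteq> {}}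
        \<union> Inr ` {\<omega>' \<in> ends V E. end_comp V E S0 \<omega>' = C}"
      unfolding end_basis_def by blast
    then have S0: "finite S0" "S0 \<subseteq> V" "\<omega>0 \<in> ends V E" "s = EB V E S0 \<omega>0"
      unfolding EB_def by simp_all
    have "end_comp V E S0 \<omega> = end_comp V E S0 \<omega>0" using w(1) S0(4) unfolding EB_def by auto
    then have "EB V E S0 \<omega> = s" using S0(4) unfolding EB_def by simp
    then show "\<exists>S. finite S \<and> S \<subseteq> V \<and> EB V E S \<omega> \<subseteq> s" using S0 by blast
  qed
qed

lemma end_nbhd:
  assumes "openin X U" "Inr \<omega> \<in> U"
  obtains S where "finite S" "S \<subseteq> V" "EB V E S \<omega> \<subseteq> U"
proof -
  have "Inr \<omega> \<in> topspace X" using assms openin_subset by blast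
  then have "\<omega> \<in> ends V E" by (cases rule: topspace_cases) auto
  then show ?thesis using end_nbhd_aux[OF openin_topology_generated_by[OF assms(1)[unfolded Freudenthal_def]]]
    assms that by blast
qed

end


lemma ept_at1: "u \<noteq> z \<Longrightarrow> ept u z t u = t" unfolding ept_def by simp
lemma ept_at2: "u \<noteq> z \<Longrightarrow> ept u z t z = 1 - t" unfolding ept_def by simp
lemma ept_other: "x \<noteq> u \<Longrightarrow> x \<noteq> z \<Longrightarrow> ept u z t x = 0" unfolding ept_def by simp

lemma ballp_supp:
  assumes "Inl g' \<in> ballp V E f e" "e \<le> \<bar>f w\<bar>"
  shows "w \<in> supp g'"
proof -
  have "\<bar>f w - g' w\<bar> < e" using assms(1) unfolding ballp_def by auto
  then have "g' w \<noteq> 0" using assms(2) by auto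
  then show ?thesis unfolding supp_def by simp
qed

lemma ballp_complex: "Inl g' \<in> ballp V E f e \<Longrightarrow> g' \<in> complex_pts V E"
  unfolding ballp_def by auto

context sgraph
begin

lemma Pts_closed:
  assumes "finite F" "F \<subseteq> V"
  shows "closedin X (Pts V E F)"
proof -
  have sub: "Pts V E F \<subseteq> topspace X" unfolding Pts_def using Inl_topspace by blast
  have "openin X (topspace X - Pts V E F)"
  proof (subst openin_subopen, intro ballI)
    fix p assume p: "p \<in> topspace X - Pts V E F"
    then have "p \<in> topspace X" by blast
    then show "\<exists>T. openin X T \<and> p \<in> T \<and> T \<subseteq> topspace X - Pts V E F"
    proof (cases rule: topspace_cases)
      case (inl g)
      then have "\<not> supp g \<subseteq> F" using p unfolding Pts_def by blast
      then obtain w where w: "w \<in> supp g" "w \<notin> F" by blast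
      have gw: "g w \<noteq> 0" using w(1) unfolding supp_def by simp
      let ?T = "ballp V E g \<bar>g w\<bar>"
      have "openin X ?T" using openin_ballp inl(1) gw by simp
      moreover have "p \<in> ?T" using center_in_ballp inl gw by simp
      moreover have "?T \<subseteq> topspace X - Pts V E F"
      proof
        fix q assume q: "q \<in> ?T"
        then obtain g' where g': "q = Inl g'" unfolding ballp_def by blast
        have "w \<in> supp g'" using ballp_supp[of g' V E g "\<bar>g w\<bar>" w] q g' by simp
        then have "q \<notin> Pts V E F" using g' w(2) unfolding Pts_def by blast
        moreover have "q \<in> topspace X" using q \<open>openin X ?T\<close> openin_subset by blast
        ultimately show "q \<in> topspace X - Pts V E F" by blast
      qed
      ultimately show ?thesis by blast
    next
      case (inr \<omega>)
      let ?T = "EB V E F \<omega>"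
      have "openin X ?T" using openin_EB assms inr(1) by blast
      moreover have "p \<in> ?T" using Inr_in_EB inr by simp
      moreover have "?T \<subseteq> topspace X - Pts V E F"
      proof
        fix q assume q: "q \<in> ?T"
        have "q \<notin> Pts V E F"
        proof
          assume "q \<in> Pts V E F"
          then obtain g where g: "q = Inl g" "supp g \<subseteq> F" unfolding Pts_def by blast
          then have "supp g \<inter> end_comp V E F \<omega> \<noteq> {}" using q unfolding EB_def by blast
          then show False using g(2) end_comp_sub by blast
        qed
        moreover have "q \<in> topspace X" using q \<open>openin X ?T\<close> openin_subset by blast
        ultimately show "q \<in> topspace X - Pts V E F" by blast
      qed
      ultimately show ?thesis by blast
    qed
  qed
  then show ?thesis unfolding closedin_def using sub by blast
qed

lemma ept_in_oedge:
  assumes "E c d" "0 < s" "s < 1" "{c, d} = {u, z}"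
  shows "Inl (ept c d s) \<in> oedge u z"
proof -
  have cd: "c \<noteq> d" using E_irr assms(1) by blast
  show ?thesis
  proof (cases "c = u")
    case True
    then have "d = z" using assms(4) cd by (metis doubleton_eq_iff)
    then show ?thesis unfolding oedge_def using True assms by blast
  next
    case False
    then have "c = z" "d = u" using assms(4) by (metis doubleton_eq_iff)+
    then have "ept c d s = ept u z (1 - s)" using ept_swap cd by metis
    moreover have "0 < 1 - s" "1 - s < 1" using assms by simp_all
    ultimately show ?thesis unfolding oedge_def by blast
  qed
qed

lemma oedge_open:
  assumes "E u z"
  shows "openin X (oedge u z)"
proof (subst openin_subopen, intro ballI)
  have uz: "u \<noteq> z" using E_irr assms by blast
  fix p assume "p \<in> oedge u z"
  then obtain t where t: "p = Inl (ept u z t)" "0 < t" "t < 1" unfolding oedge_def by blast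
  let ?f = "ept u z t" let ?e = "min t (1 - t)"
  have fc: "?f \<in> complex_pts V E" unfolding complex_pts_def inner_edge_pts_def using assms t by blast
  have e: "?e > 0" using t by simp
  let ?T = "ballp V E ?f ?e"
  have "openin X ?T" using openin_ballp fc e by blast
  moreover have "p \<in> ?T" using center_in_ballp fc e t by simp
  moreover have "?T \<subseteq> oedge u z"
  proof
    fix q assume q: "q \<in> ?T"
    then obtain g where g: "q = Inl g" unfolding ballp_def by blast
    have gc: "g \<in> complex_pts V E" using q g ballp_complex by blast
    have su: "u \<in> supp g" using ballp_supp[of g V E ?f ?e u] q g ept_at1[OF uz] t by simp
    have sz: "z \<in> supp g" using ballp_supp[of g V E ?f ?e z] q g ept_at2[OF uz] t by simp
    from gc show "q \<in> oedge u z"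
    proof (cases rule: complex_pts_cases)
      case (vert w)
      then show ?thesis using su sz uz by simp
    next
      case (edge c d s)
      have "supp g = {c, d}" using edge supp_ept E_irr by metis
      then have "{c, d} = {u, z}" using su sz uz E_irr[OF edge(1)] by auto
      then show ?thesis using ept_in_oedge edge g by blast
    qed
  qed
  ultimately show "\<exists>T. openin X T \<and> p \<in> T \<and> T \<subseteq> oedge u z" by blast
qed

lemma oedge_sub_Pts:
  assumes "E u z" shows "oedge u z \<subseteq> Pts V E {u, z}"
proof
  fix p assume "p \<in> oedge u z"
  then obtain t where t: "p = Inl (ept u z t)" "0 < t" "t < 1" unfolding oedge_def by blast
  have "ept u z t \<in> complex_pts V E" unfolding complex_pts_def inner_edge_pts_def using assms t by blast
  moreover have "supp (ept u z t) = {u, z}" using supp_ept E_irr assms t by metis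
  ultimately show "p \<in> Pts V E {u, z}" unfolding Pts_def using t by blast
qed

lemma Pts_edge_cases:
  assumes "E u z" "p \<in> Pts V E {u, z}" "p \<notin> oedge u z"
  shows "p = Inl (vpt u) \<or> p = Inl (vpt z)"
proof -
  obtain g where g: "p = Inl g" "g \<in> complex_pts V E" "supp g \<subseteq> {u, z}"
    using assms(2) unfolding Pts_def by blast
  from g(2) show ?thesis
  proof (cases rule: complex_pts_cases)
    case (vert w)
    then show ?thesis using g by auto
  next
    case (edge c d s)
    have cd: "c \<noteq> d" using E_irr edge(1) by blast
    have "supp g = {c, d}" using edge supp_ept cd by metis
    then have "{c, d} = {u, z}" using g(3) cd by auto
    then have "p \<in> oedge u z" using ept_in_oedge edge g(1) by blast
    then show ?thesis using assms(3) by blast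
  qed
qed

lemma vpt_notin_oedge: "Inl (vpt w) \<notin> oedge u z" if "u \<noteq> z"
  unfolding oedge_def using vpt_ne_ept[OF that] by blast

lemma closure_Inl:
  assumes VF: "VF \<subseteq> V" and EF: "\<And>a b. EF a b \<Longrightarrow> E a b \<and> a \<in> VF \<and> b \<in> VF \<and> EF b a"
    and g: "Inl g \<in> gclosure V E VF EF"
  shows "(\<exists>u\<in>VF. g = vpt u) \<or> (\<exists>u z s. EF u z \<and> 0 < s \<and> s < 1 \<and> g = ept u z s)"
proof -
  have gt: "Inl g \<in> topspace X" using g closure_of_subset_topspace[of X "subgraph_pts VF EF"]
    unfolding gclosure_def by blast
  then have gc: "g \<in> complex_pts V E" by (cases rule: topspace_cases) auto
  have meet: "\<exists>y\<in>subgraph_pts VF EF. y \<in> T" if "openin X T" "Inl g \<in> T" for T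
    using g that unfolding gclosure_def closure_of_def by blast
  from gc show ?thesis
  proof (cases rule: complex_pts_cases)
    case (vert u)
    let ?T = "ballp V E g 1"
    obtain y where y: "y \<in> subgraph_pts VF EF" "y \<in> ?T"
      using meet[of ?T] openin_ballp gc center_in_ballp by (meson zero_less_one)
    obtain g' where g': "y = Inl g'" "g' \<in> vertex_pts VF \<union> inner_edge_pts EF"
      using y(1) unfolding subgraph_pts_def by blast
    have "u \<in> supp g'" using ballp_supp[of g' V E g 1 u] y g' vert by (simp add: vpt_def)
    then have "u \<in> VF"
      using g'(2) EF unfolding vertex_pts_def inner_edge_pts_def
      by (auto simp: supp_ept E_irr)
    then show ?thesis using vert by blast
  next
    case (edge u z t)
    have uz: "u \<noteq> z" using E_irr edge by blast
    let ?e = "min t (1 - t)"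
    let ?T = "ballp V E g ?e"
    have e: "?e > 0" using edge by simp
    obtain y where y: "y \<in> subgraph_pts VF EF" "y \<in> ?T"
      using meet[of ?T] openin_ballp[OF gc e] center_in_ballp[OF gc e] by blast
    obtain g' where g': "y = Inl g'" "g' \<in> vertex_pts VF \<union> inner_edge_pts EF"
      using y(1) unfolding subgraph_pts_def by blast
    have su: "u \<in> supp g'" using ballp_supp[of g' V E g ?e u] y g' edge ept_at1[OF uz] by simp
    have sz: "z \<in> supp g'" using ballp_supp[of g' V E g ?e z] y g' edge ept_at2[OF uz] by simp
    have "EF u z"
    proof (cases "g' \<in> vertex_pts VF")
      case True
      then show ?thesis using su sz uz unfolding vertex_pts_def by auto
    next
      case False
      then obtain c d s where cd: "EF c d" "0 < s" "s < 1" "g' = ept c d s"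
        using g'(2) unfolding inner_edge_pts_def by blast
      have "c \<noteq> d" using EF[OF cd(1)] E_irr by blast
      then have "supp g' = {c, d}" using cd supp_ept by metis
      then have "{c, d} = {u, z}" using su sz uz by auto
      then show ?thesis using cd(1) EF by (metis doubleton_eq_iff)
    qed
    then show ?thesis using edge by blast
  qed
qed

lemma vball_cases:
  assumes "Inl g \<in> ballp V E (vpt u) (2/3)"
  shows "g = vpt u \<or> (\<exists>z s. E u z \<and> 0 < s \<and> s < 1 \<and> g = ept u z s)"
proof -
  have gc: "g \<in> complex_pts V E" using assms ballp_complex by blast
  have su: "u \<in> supp g" using ballp_supp[OF assms, of u] by (simp add: vpt_def)
  from gc show ?thesis
  proof (cases rule: complex_pts_cases)
    case (vert w) then show ?thesis using su by simp
  next
    case (edge c d s)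
    have cd: "c \<noteq> d" using E_irr edge(1) by blast
    have "supp g = {c, d}" using edge supp_ept cd by metis
    then have "u = c \<or> u = d" using su by auto
    then show ?thesis
    proof
      assume "u = c" then show ?thesis using edge by blast
    next
      assume "u = d"
      then have "g = ept u c (1 - s)" using edge ept_swap cd by metis
      moreover have "E u c" using edge(1) \<open>u = d\<close> E_sym by blast
      moreover have "0 < 1 - s" "1 - s < 1" using edge by simp_all
      ultimately show ?thesis by blast
    qed
  qed
qed

end


lemma cont_nbhd:
  assumes "continuous_map (top_of_set {0..1::real}) Y g" "openin Y U" "t \<in> {0..1}" "g t \<in> U"
  shows "\<exists>d>0. \<forall>s\<in>{0..1}. \<bar>s - t\<bar> < d \<longrightarrow> g s \<in> U"
proof -
  have "openin (top_of_set {0..1::real}) {s \<in> topspace (top_of_set {0..1::real}). g s \<in> U}"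
    using openin_continuous_map_preimage[OF assms(1,2)] .
  then have o: "openin (top_of_set {0..1::real}) {s \<in> {0..1}. g s \<in> U}" by simp
  have "t \<in> {s \<in> {0..1}. g s \<in> U}" using assms by simp
  then obtain e where e: "e > 0" "\<forall>x'\<in>{0..1}. dist x' t < e \<longrightarrow> x' \<in> {s \<in> {0..1}. g s \<in> U}"
    using o unfolding openin_euclidean_subtopology_iff by meson
  have "\<forall>s\<in>{0..1}. \<bar>s - t\<bar> < e \<longrightarrow> g s \<in> U"
  proof (intro ballI impI)
    fix s :: real assume "s \<in> {0..1}" "\<bar>s - t\<bar> < e"
    then have "dist s t < e" by (simp add: dist_real_def)
    then show "g s \<in> U" using e(2) \<open>s \<in> {0..1}\<close> by blast
  qed
  then show ?thesis using e(1) by blast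
qed

lemma cont_topspace:
  assumes "continuous_map (top_of_set {0..1::real}) Y g" "t \<in> {0..1}"
  shows "g t \<in> topspace Y"
  using continuous_map_image_subset_topspace[OF assms(1)] assms(2) by auto

lemma exit_left:
  assumes g: "continuous_map (top_of_set {0..1::real}) Y g"
    and Ob: "openin Y Ob" and P: "closedin Y P" and OP: "Ob \<subseteq> P"
    and a: "0 \<le> a" and at: "a < t" and t1: "t \<le> 1"
    and gt: "g t \<in> Ob" and ga: "g a \<notin> Ob"
  shows "\<exists>t1. a \<le> t1 \<and> t1 < t \<and> (\<forall>s. t1 < s \<and> s \<le> t \<longrightarrow> g s \<in> Ob) \<and> g t1 \<in> P \<and> g t1 \<notin> Ob"
proof -
  define N where "N = {s \<in> {a..t}. g s \<notin> Ob}"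
  define m where "m = Sup N"
  have aN: "a \<in> N" using ga at unfolding N_def by simp
  have ne: "N \<noteq> {}" using aN by blast
  have bdd: "bdd_above N" unfolding N_def by (rule bdd_aboveI[of _ t]) auto
  have am: "a \<le> m" unfolding m_def using cSup_upper[OF aN bdd] .
  have mt: "m \<le> t" unfolding m_def by (rule cSup_least[OF ne]) (auto simp: N_def)
  have after: "g s \<in> Ob" if "m < s" "s \<le> t" for s
  proof (rule ccontr)
    assume "g s \<notin> Ob"
    then have "s \<in> N" unfolding N_def using that am by simp
    then have "s \<le> m" unfolding m_def using cSup_upper bdd by blast
    then show False using that by simp
  qed
  have m01: "m \<in> {0..1}" using am mt a t1 by simp
  have gm: "g m \<notin> Ob"
  proof
    assume "g m \<in> Ob"
    then obtain d where d: "d > 0" "\<forall>s\<in>{0..1}. \<bar>s - m\<bar> < d \<longrightarrow> g s \<in> Ob"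
      using cont_nbhd[OF g Ob m01] by blast
    have "m - d < Sup N" using d(1) unfolding m_def by simp
    then obtain s where s: "s \<in> N" "m - d < s" using less_cSupE ne by blast
    have "s \<le> m" unfolding m_def using cSup_upper[OF s(1) bdd] .
    have "s \<in> {0..1}" using s(1) a t1 unfolding N_def by auto
    moreover have "\<bar>s - m\<bar> < d" using s(2) \<open>s \<le> m\<close> by simp
    ultimately have "g s \<in> Ob" using d(2) by blast
    then show False using s(1) unfolding N_def by simp
  qed
  have "m \<noteq> t" using gm gt by blast
  then have mlt: "m < t" using mt by simp
  have gP: "g m \<in> P"
  proof (rule ccontr)
    assume nP: "g m \<notin> P"
    have "g m \<in> topspace Y" using cont_topspace[OF g m01] .
    then have "g m \<in> topspace Y - P" using nP by simp
    moreover have "openin Y (topspace Y - P)" using P by (simp add: closedin_def)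
    ultimately obtain d where d: "d > 0" "\<forall>s\<in>{0..1}. \<bar>s - m\<bar> < d \<longrightarrow> g s \<in> topspace Y - P"
      using cont_nbhd[OF g _ m01] by blast
    define s where "s = min (m + d/2) t"
    have s: "m < s" "s \<le> t" "\<bar>s - m\<bar> < d" using d(1) mlt unfolding s_def by auto
    have "s \<in> {0..1}" using s am a t1 by simp
    then have "g s \<notin> P" using d(2) s(3) by blast
    moreover have "g s \<in> Ob" using after s by blast
    ultimately show False using OP by blast
  qed
  show ?thesis using am mlt after gP gm by blast
qed

lemma exit_right:
  assumes g: "continuous_map (top_of_set {0..1::real}) Y g"
    and Ob: "openin Y Ob" and P: "closedin Y P" and OP: "Ob \<subseteq> P"
    and b: "b \<le> 1" and tb: "t < b" and t0: "0 \<le> t"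
    and gt: "g t \<in> Ob" and gb: "g b \<notin> Ob"
  shows "\<exists>t2. t < t2 \<and> t2 \<le> b \<and> (\<forall>s. t \<le> s \<and> s < t2 \<longrightarrow> g s \<in> Ob) \<and> g t2 \<in> P \<and> g t2 \<notin> Ob"
proof -
  define N where "N = {s \<in> {t..b}. g s \<notin> Ob}"
  define m where "m = Inf N"
  have bN: "b \<in> N" using gb tb unfolding N_def by simp
  have ne: "N \<noteq> {}" using bN by blast
  have bdd: "bdd_below N" unfolding N_def by (rule bdd_belowI[of _ t]) auto
  have mb: "m \<le> b" unfolding m_def using cInf_lower[OF bN bdd] .
  have tm: "t \<le> m" unfolding m_def by (rule cInf_greatest[OF ne]) (auto simp: N_def)
  have before: "g s \<in> Ob" if "t \<le> s" "s < m" for s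
  proof (rule ccontr)
    assume "g s \<notin> Ob"
    then have "s \<in> N" unfolding N_def using that mb by simp
    then have "m \<le> s" unfolding m_def using cInf_lower bdd by blast
    then show False using that by simp
  qed
  have m01: "m \<in> {0..1}" using mb tm b t0 by simp
  have gm: "g m \<notin> Ob"
  proof
    assume "g m \<in> Ob"
    then obtain d where d: "d > 0" "\<forall>s\<in>{0..1}. \<bar>s - m\<bar> < d \<longrightarrow> g s \<in> Ob"
      using cont_nbhd[OF g Ob m01] by blast
    have "Inf N < m + d" using d(1) unfolding m_def by simp
    then obtain s where s: "s \<in> N" "s < m + d" using cInf_lessD ne by blast
    have "m \<le> s" unfolding m_def using cInf_lower[OF s(1) bdd] .
    have "s \<in> {0..1}" using s(1) b t0 unfolding N_def by auto
    moreover have "\<bar>s - m\<bar> < d" using s(2) \<open>m \<le> s\<close> by simp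
    ultimately have "g s \<in> Ob" using d(2) by blast
    then show False using s(1) unfolding N_def by simp
  qed
  have "m \<noteq> t" using gm gt by blast
  then have tlm: "t < m" using tm by simp
  have gP: "g m \<in> P"
  proof (rule ccontr)
    assume nP: "g m \<notin> P"
    have "g m \<in> topspace Y" using cont_topspace[OF g m01] .
    then have "g m \<in> topspace Y - P" using nP by simp
    moreover have "openin Y (topspace Y - P)" using P by (simp add: closedin_def)
    ultimately obtain d where d: "d > 0" "\<forall>s\<in>{0..1}. \<bar>s - m\<bar> < d \<longrightarrow> g s \<in> topspace Y - P"
      using cont_nbhd[OF g _ m01] by blast
    define s where "s = max (m - d/2) t"
    have s: "s < m" "t \<le> s" "\<bar>s - m\<bar> < d" using d(1) tlm unfolding s_def by auto
    have "s \<in> {0..1}" using s mb b t0 by simp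
    then have "g s \<notin> P" using d(2) s(3) by blast
    moreover have "g s \<in> Ob" using before s by blast
    ultimately show False using OP by blast
  qed
  show ?thesis using mb tlm before gP gm by blast
qed


locale cat = sgraph V E for V :: "'a set" and E +
  fixes VT ET and h :: "real \<Rightarrow> 'a fpoint"
  assumes lf: "locally_finite V E" and tc: "top_caterpillar V E VT ET h" and VTV: "VT = V"
begin

abbreviation "sp \<equiv> spine_V VT ET"
abbreviation "LL \<equiv> leaves VT ET"
abbreviation "AA \<equiv> gclosure V E sp (spine_E VT ET)"
abbreviation "pos \<equiv> arc_pos h"

lemma forest: "forest_in VT ET V E" using tc unfolding top_caterpillar_def by blast
lemma sgT: "simple_graph VT ET" using forest unfolding forest_in_def subgraph_def by blast
lemma ET_E: "ET x y \<Longrightarrow> E x y" using forest unfolding forest_in_def subgraph_def by blast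
lemma ET_sym: "ET x y \<Longrightarrow> ET y x" using sgT unfolding simple_graph_def by blast
lemma ET_V: "ET x y \<Longrightarrow> x \<in> VT \<and> y \<in> VT" using sgT unfolding simple_graph_def by blast

lemma hom: "homeomorphic_map (top_of_set {0..1}) (subtopology X AA) h"
  using tc unfolding top_caterpillar_def arc_param_def by blast

lemma AA_top: "AA \<subseteq> topspace X"
  unfolding gclosure_def by (rule closure_of_subset_topspace)

lemma himg: "h ` {0..1} = AA"
  using homeomorphic_imp_surjective_map[OF hom] AA_top by auto

lemma hinj: "inj_on h {0..1}"
  using homeomorphic_imp_injective_map[OF hom] by simp

lemma hcont: "continuous_map (top_of_set {0..1}) X h"
  using homeomorphic_imp_continuous_map[OF hom] continuous_map_in_subtopology by blast

lemma hA: "t \<in> {0..1} \<Longrightarrow> h t \<in> AA" using himg by blast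

lemma spE: "spine_E VT ET a b \<Longrightarrow> E a b \<and> a \<in> sp \<and> b \<in> sp \<and> spine_E VT ET b a"
  unfolding spine_E_def spine_V_def using ET_E ET_V ET_sym by blast

lemma sp_V: "sp \<subseteq> V" unfolding spine_V_def using VTV by blast

lemma vpt_complex: "u \<in> V \<Longrightarrow> vpt u \<in> complex_pts V E"
  unfolding complex_pts_def vertex_pts_def by blast

lemma vpt_in_A:
  assumes "z \<in> sp" shows "Inl (vpt z) \<in> AA"
proof -
  have "subgraph_pts sp (spine_E VT ET) \<subseteq> topspace X"
  proof
    fix p assume "p \<in> subgraph_pts sp (spine_E VT ET)"
    then obtain g where g: "p = Inl g" "g \<in> vertex_pts sp \<union> inner_edge_pts (spine_E VT ET)"
      unfolding subgraph_pts_def by blast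
    then have "g \<in> complex_pts V E"
      unfolding complex_pts_def vertex_pts_def inner_edge_pts_def using sp_V spE by blast
    then show "p \<in> topspace X" using Inl_topspace g by simp
  qed
  then have "subgraph_pts sp (spine_E VT ET) \<subseteq> AA" unfolding gclosure_def by (rule closure_of_subset)
  moreover have "Inl (vpt z) \<in> subgraph_pts sp (spine_E VT ET)"
    unfolding subgraph_pts_def vertex_pts_def using assms by blast
  ultimately show ?thesis by blast
qed

lemma pos_props:
  assumes "z \<in> sp" shows "pos z \<in> {0..1}" "h (pos z) = Inl (vpt z)"
proof -
  have "Inl (vpt z) \<in> h ` {0..1}" using vpt_in_A assms himg by blast
  then show "pos z \<in> {0..1}" "h (pos z) = Inl (vpt z)" unfolding arc_pos_def
    using inv_into_into[of "Inl (vpt z)" h "{0..1}"] f_inv_into_f[of "Inl (vpt z)" h "{0..1}"]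
    by blast+
qed

lemma A_Inl:
  assumes "Inl g \<in> AA"
  shows "(\<exists>u\<in>sp. g = vpt u) \<or> (\<exists>u z s. spine_E VT ET u z \<and> 0 < s \<and> s < 1 \<and> g = ept u z s)"
proof -
  have "\<And>a b. spine_E VT ET a b \<Longrightarrow> E a b \<and> a \<in> sp \<and> b \<in> sp \<and> spine_E VT ET b a"
    by (rule spE)
  from closure_Inl[OF sp_V this assms] show ?thesis .
qed

lemma pos_unique:
  assumes "t \<in> {0..1}" "h t = Inl (vpt z)"
  shows "z \<in> sp" "t = pos z"
proof -
  have "Inl (vpt z) \<in> AA" using hA[OF assms(1)] assms(2) by simp
  then have "(\<exists>u\<in>sp. vpt z = vpt u) \<or> (\<exists>u w s. spine_E VT ET u w \<and> 0 < s \<and> s < 1 \<and> vpt z = ept u w s)"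
    using A_Inl by blast
  moreover have "\<not> (\<exists>u w s. spine_E VT ET u w \<and> 0 < s \<and> s < 1 \<and> vpt z = ept u w s)"
  proof
    assume "\<exists>u w s. spine_E VT ET u w \<and> 0 < s \<and> s < 1 \<and> vpt z = ept u w s"
    then obtain u w s where uws: "spine_E VT ET u w" "0 < s" "s < 1" "vpt z = ept u w s" by blast
    have "u \<noteq> w" using spE[OF uws(1)] E_irr by blast
    from vpt_ne_ept[OF this uws(2) uws(3), of z] uws(4) show False by simp
  qed
  ultimately have "\<exists>u\<in>sp. vpt z = vpt u" by blast
  then obtain u where u: "u \<in> sp" "vpt z = vpt u" by blast
  have "z = u" using vpt_inj[OF u(2)] .
  then show zs: "z \<in> sp" using \<open>u \<in> sp\<close> by simp
  have "h t = h (pos z)" using pos_props(2)[OF zs] assms(2) by simp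
  then show "t = pos z" using pos_props(1)[OF zs] assms(1) hinj unfolding inj_on_def by blast
qed

lemma pos_inj:
  assumes "z \<in> sp" "z' \<in> sp" "pos z = pos z'" shows "z = z'"
proof -
  have "Inl (vpt z) = Inl (vpt z')" using pos_props(2)[OF assms(1)] pos_props(2)[OF assms(2)] assms(3) by simp
  then have "vpt z = vpt z'" by simp
  then show ?thesis by (rule vpt_inj)
qed

lemma A_cases:
  assumes "t \<in> {0..1}"
  obtains (v) z where "z \<in> sp" "h t = Inl (vpt z)"
  | (e) u z s where "spine_E VT ET u z" "0 < s" "s < 1" "h t = Inl (ept u z s)"
  | (r) \<omega> where "\<omega> \<in> ends V E" "h t = Inr \<omega>"
proof -
  have "h t \<in> topspace X" using hA assms AA_top by blast
  then show ?thesis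
  proof (cases rule: topspace_cases)
    case (inl g)
    have "(\<exists>u\<in>sp. g = vpt u) \<or> (\<exists>u z s. spine_E VT ET u z \<and> 0 < s \<and> s < 1 \<and> g = ept u z s)"
      using A_Inl hA[OF assms] inl(2) by simp
    then show ?thesis
    proof
      assume "\<exists>u\<in>sp. g = vpt u" then show ?thesis using that(1) inl(2) by blast
    next
      assume "\<exists>u z s. spine_E VT ET u z \<and> 0 < s \<and> s < 1 \<and> g = ept u z s"
      then obtain u z s where "spine_E VT ET u z" "0 < s" "s < 1" "g = ept u z s" by blast
      then show ?thesis using that(2) inl(2) by blast
    qed
  next
    case (inr \<omega>) then show ?thesis using that by blast
  qed
qed

end


lemma ev_within:
  fixes a :: real
  assumes "d > 0" "\<forall>s\<in>J. \<bar>s - a\<bar> < d \<longrightarrow> P s"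
  shows "eventually P (at a within J)"
  unfolding eventually_at
proof (intro exI[of _ d] conjI ballI impI)
  show "d > 0" by (rule assms(1))
  fix x assume "x \<in> J" "x \<noteq> a \<and> dist x a < d"
  then show "P x" using assms(2) by (simp add: dist_real_def)
qed

context sgraph
begin

lemma ballmem:
  assumes "E a b" "1/2 \<le> s" "s < 1"
  shows "Inl (ept a b s) \<in> ballp V E (vpt a) (2/3)"
proof -
  have ab: "a \<noteq> b" using E_irr assms(1) by blast
  have c: "ept a b s \<in> complex_pts V E" unfolding complex_pts_def inner_edge_pts_def
    using assms by force
  have "\<bar>vpt a x - ept a b s x\<bar> < 2/3" for x
    using assms ab unfolding vpt_def ept_def by auto
  then show ?thesis unfolding ballp_def using c by blast
qed

end

context cat
begin

lemma edge_exit: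
  assumes E: "E u z" and r: "0 \<le> \<alpha>" "\<alpha> < t" "t < \<beta>" "\<beta> \<le> 1"
    and ht: "h t \<in> oedge u z" and ha: "h \<alpha> \<notin> oedge u z" and hb: "h \<beta> \<notin> oedge u z"
  shows "\<exists>t1 t2. \<alpha> \<le> t1 \<and> t1 < t \<and> t < t2 \<and> t2 \<le> \<beta> \<and> (\<forall>s. t1 < s \<and> s < t2 \<longrightarrow> h s \<in> oedge u z)
     \<and> (h t1 = Inl (vpt u) \<or> h t1 = Inl (vpt z)) \<and> (h t2 = Inl (vpt u) \<or> h t2 = Inl (vpt z))"
proof -
  have O: "openin X (oedge u z)" using oedge_open[OF E] .
  have fin: "finite {u, z}" by simp
  have sub: "{u, z} \<subseteq> V" using E_V[OF E] by simp
  have P: "closedin X (Pts V E {u, z})" using Pts_closed[OF fin sub] .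
  have OP: "oedge u z \<subseteq> Pts V E {u, z}" using oedge_sub_Pts[OF E] .
  obtain t1 where t1: "\<alpha> \<le> t1" "t1 < t" "\<forall>s. t1 < s \<and> s \<le> t \<longrightarrow> h s \<in> oedge u z"
     "h t1 \<in> Pts V E {u, z}" "h t1 \<notin> oedge u z"
    using exit_left[OF hcont O P OP r(1) r(2) _ ht ha] r by auto
  obtain t2 where t2: "t < t2" "t2 \<le> \<beta>" "\<forall>s. t \<le> s \<and> s < t2 \<longrightarrow> h s \<in> oedge u z"
     "h t2 \<in> Pts V E {u, z}" "h t2 \<notin> oedge u z"
    using exit_right[OF hcont O P OP r(4) r(3) _ ht hb] r by auto
  have mid: "\<forall>s. t1 < s \<and> s < t2 \<longrightarrow> h s \<in> oedge u z"
  proof (intro allI impI)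
    fix s assume s: "t1 < s \<and> s < t2"
    show "h s \<in> oedge u z"
    proof (cases "s \<le> t")
      case True then show ?thesis using t1(3) s by blast
    next
      case False then show ?thesis using t2(3) s by simp
    qed
  qed
  have "h t1 = Inl (vpt u) \<or> h t1 = Inl (vpt z)" using Pts_edge_cases[OF E t1(4) t1(5)] .
  moreover have "h t2 = Inl (vpt u) \<or> h t2 = Inl (vpt z)" using Pts_edge_cases[OF E t2(4) t2(5)] .
  ultimately show ?thesis using t1(1,2) t2(1,2) mid by blast
qed

lemma near_vertex_edge:
  assumes q: "q \<in> sp" and t: "t \<in> {0..1}" "t \<noteq> pos q" and hb: "h t \<in> ballp V E (vpt q) (2/3)"
  shows "\<exists>z s. spine_E VT ET q z \<and> 0 < s \<and> s < 1 \<and> h t = Inl (ept q z s)"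
proof -
  obtain g where g: "h t = Inl g" using hb unfolding ballp_def by blast
  have gb: "Inl g \<in> ballp V E (vpt q) (2/3)" using hb g by simp
  have "g \<noteq> vpt q"
  proof
    assume "g = vpt q"
    then have "t = pos q" using pos_unique(2)[OF t(1)] g by simp
    then show False using t(2) by simp
  qed
  then obtain z s where zs: "E q z" "0 < s" "s < 1" "g = ept q z s" using vball_cases[OF gb] by blast
  have qz: "q \<noteq> z" using E_irr zs(1) by blast
  have "Inl g \<in> AA" using hA[OF t(1)] g by simp
  then have "(\<exists>u\<in>sp. g = vpt u) \<or> (\<exists>u w s. spine_E VT ET u w \<and> 0 < s \<and> s < 1 \<and> g = ept u w s)"
    by (rule A_Inl)
  then have "spine_E VT ET q z"
  proof
    assume "\<exists>u\<in>sp. g = vpt u"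
    then obtain u where "g = vpt u" by blast
    then show ?thesis using vpt_ne_ept[OF qz zs(2) zs(3), of u] zs(4) by simp
  next
    assume "\<exists>u w s. spine_E VT ET u w \<and> 0 < s \<and> s < 1 \<and> g = ept u w s"
    then obtain c d s' where cd: "spine_E VT ET c d" "0 < s'" "s' < 1" "g = ept c d s'" by blast
    have cd': "c \<noteq> d" using spE[OF cd(1)] E_irr by blast
    have "supp g = {c, d}" using supp_ept[OF cd' cd(2) cd(3)] cd(4) by simp
    moreover have "supp g = {q, z}" using supp_ept[OF qz zs(2) zs(3)] zs(4) by simp
    ultimately have "{c, d} = {q, z}" by simp
    then have "(c = q \<and> d = z) \<or> (c = z \<and> d = q)" by (simp add: doubleton_eq_iff)
    then show ?thesis using cd(1) spE by blast
  qed
  then show ?thesis using zs g by blast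
qed

lemma succ_exists:
  assumes q: "q \<in> sp" and b: "b \<in> sp" and qb: "pos q < pos b"
  shows "\<exists>z. consecA VT ET h q z \<and> spine_E VT ET q z"
proof -
  let ?t0 = "pos q" and ?\<beta> = "pos b"
  have t0: "?t0 \<in> {0..1}" "h ?t0 = Inl (vpt q)" using pos_props[OF q] by simp_all
  have bb: "?\<beta> \<in> {0..1}" "h ?\<beta> = Inl (vpt b)" using pos_props[OF b] by simp_all
  have vc: "vpt q \<in> complex_pts V E" using vpt_complex sp_V q by blast
  have Bo: "openin X (ballp V E (vpt q) (2/3))" using openin_ballp[OF vc] by simp
  have Bin: "h ?t0 \<in> ballp V E (vpt q) (2/3)" using center_in_ballp[OF vc] t0(2) by simp
  obtain d where d: "d > 0" "\<forall>s\<in>{0..1}. \<bar>s - ?t0\<bar> < d \<longrightarrow> h s \<in> ballp V E (vpt q) (2/3)"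
    using cont_nbhd[OF hcont Bo t0(1) Bin] by blast
  define m where "m = min d (?\<beta> - ?t0)"
  define t where "t = ?t0 + m / 2"
  have m1: "m \<le> ?\<beta> - ?t0" "m \<le> d" "0 < m"
    using d(1) qb unfolding m_def by auto
  have tt1: "?t0 < t" "t < ?\<beta>" "t - ?t0 < d" using m1 by (simp_all add: t_def)
  have tt: "?t0 < t" "t < ?\<beta>" "\<bar>t - ?t0\<bar> < d" using tt1 by simp_all
  have t01: "t \<in> {0..1}" using tt t0(1) bb(1) by simp
  have "h t \<in> ballp V E (vpt q) (2/3)" using d(2) t01 tt(3) by blast
  then obtain z s where zs: "spine_E VT ET q z" "0 < s" "s < 1" "h t = Inl (ept q z s)"
    using near_vertex_edge[OF q t01] tt(1) by force
  have Eqz: "E q z" "z \<in> sp" using spE[OF zs(1)] by simp_all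
  have qz: "q \<noteq> z" using E_irr Eqz(1) by blast
  have ht: "h t \<in> oedge q z" unfolding oedge_def using zs by blast
  have h0: "h ?t0 \<notin> oedge q z" using t0(2) vpt_notin_oedge[OF qz] by simp
  have hb: "h ?\<beta> \<notin> oedge q z" using bb(2) vpt_notin_oedge[OF qz] by simp
  have r: "0 \<le> ?t0" "?\<beta> \<le> 1" using t0(1) bb(1) by simp_all
  obtain t1 t2 where T: "?t0 \<le> t1" "t1 < t" "t < t2" "t2 \<le> ?\<beta>"
     "\<forall>s. t1 < s \<and> s < t2 \<longrightarrow> h s \<in> oedge q z"
     "h t1 = Inl (vpt q) \<or> h t1 = Inl (vpt z)" "h t2 = Inl (vpt q) \<or> h t2 = Inl (vpt z)"
    using edge_exit[OF Eqz(1) r(1) tt(1) tt(2) r(2) ht h0 hb] by blast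
  have t1in: "t1 \<in> {0..1}" using T(1,2) t0(1) t01 by simp
  have t2in: "t2 \<in> {0..1}" using T(3,4) t01 bb(1) by simp
  have ht2: "h t2 = Inl (vpt z)"
  proof (rule ccontr)
    assume "h t2 \<noteq> Inl (vpt z)"
    then have "h t2 = Inl (vpt q)" using T(7) by blast
    then have "t2 = ?t0" using pos_unique(2)[OF t2in] by simp
    then show False using T(3) tt(1) by simp
  qed
  have p2: "t2 = pos z" using pos_unique(2)[OF t2in ht2] .
  have ht1: "h t1 = Inl (vpt q)"
  proof (rule ccontr)
    assume "h t1 \<noteq> Inl (vpt q)"
    then have "h t1 = Inl (vpt z)" using T(6) by blast
    then have "t1 = pos z" using pos_unique(2)[OF t1in] by simp
    then show False using p2 T(2) T(3) by simp
  qed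
  have p1: "t1 = ?t0" using pos_unique(2)[OF t1in ht1] .
  have cons: "consecA VT ET h q z"
    unfolding consecA_def
  proof
    show "lessA VT ET h q z" unfolding lessA_def using q Eqz(2) p2 T(3) tt(1) by simp
    show "\<not> (\<exists>u. lessA VT ET h q u \<and> lessA VT ET h u z)"
    proof
      assume "\<exists>u. lessA VT ET h q u \<and> lessA VT ET h u z"
      then obtain u where u: "u \<in> sp" "pos q < pos u" "pos u < pos z" unfolding lessA_def by blast
      have "h (pos u) \<in> oedge q z" using T(5) u(2) u(3) p1 p2 by simp
      then show False using pos_props(2)[OF u(1)] vpt_notin_oedge[OF qz] by simp
    qed
  qed
  show ?thesis using cons zs(1) by blast
qed

lemma pred_exists:
  assumes q: "q \<in> sp" and b: "b \<in> sp" and qb: "pos b < pos q"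
  shows "\<exists>z. consecA VT ET h z q \<and> spine_E VT ET z q"
proof -
  let ?t0 = "pos q" and ?\<alpha> = "pos b"
  have t0: "?t0 \<in> {0..1}" "h ?t0 = Inl (vpt q)" using pos_props[OF q] by simp_all
  have bb: "?\<alpha> \<in> {0..1}" "h ?\<alpha> = Inl (vpt b)" using pos_props[OF b] by simp_all
  have vc: "vpt q \<in> complex_pts V E" using vpt_complex sp_V q by blast
  have Bo: "openin X (ballp V E (vpt q) (2/3))" using openin_ballp[OF vc] by simp
  have Bin: "h ?t0 \<in> ballp V E (vpt q) (2/3)" using center_in_ballp[OF vc] t0(2) by simp
  obtain d where d: "d > 0" "\<forall>s\<in>{0..1}. \<bar>s - ?t0\<bar> < d \<longrightarrow> h s \<in> ballp V E (vpt q) (2/3)"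
    using cont_nbhd[OF hcont Bo t0(1) Bin] by blast
  define m where "m = min d (?t0 - ?\<alpha>)"
  define t where "t = ?t0 - m / 2"
  have m1: "m \<le> ?t0 - ?\<alpha>" "m \<le> d" "0 < m"
    using d(1) qb unfolding m_def by auto
  have tt1: "t < ?t0" "?\<alpha> < t" "?t0 - t < d" using m1 by (simp_all add: t_def)
  have tt: "t < ?t0" "?\<alpha> < t" "\<bar>t - ?t0\<bar> < d" using tt1 by simp_all
  have t01: "t \<in> {0..1}" using tt t0(1) bb(1) by simp
  have "h t \<in> ballp V E (vpt q) (2/3)" using d(2) t01 tt(3) by blast
  then obtain z s where zs: "spine_E VT ET q z" "0 < s" "s < 1" "h t = Inl (ept q z s)"
    using near_vertex_edge[OF q t01] tt(1) by force
  have Eqz: "E q z" "z \<in> sp" "spine_E VT ET z q" using spE[OF zs(1)] by simp_all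
  have qz: "q \<noteq> z" using E_irr Eqz(1) by blast
  have ht: "h t \<in> oedge q z" unfolding oedge_def using zs by blast
  have h0: "h ?t0 \<notin> oedge q z" using t0(2) vpt_notin_oedge[OF qz] by simp
  have ha: "h ?\<alpha> \<notin> oedge q z" using bb(2) vpt_notin_oedge[OF qz] by simp
  have r: "0 \<le> ?\<alpha>" "?t0 \<le> 1" using t0(1) bb(1) by simp_all
  obtain t1 t2 where T: "?\<alpha> \<le> t1" "t1 < t" "t < t2" "t2 \<le> ?t0"
     "\<forall>s. t1 < s \<and> s < t2 \<longrightarrow> h s \<in> oedge q z"
     "h t1 = Inl (vpt q) \<or> h t1 = Inl (vpt z)" "h t2 = Inl (vpt q) \<or> h t2 = Inl (vpt z)"
    using edge_exit[OF Eqz(1) r(1) tt(2) tt(1) r(2) ht ha h0] by blast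
  have t1in: "t1 \<in> {0..1}" using T(1,2) bb(1) t01 by simp
  have t2in: "t2 \<in> {0..1}" using T(3,4) t01 t0(1) by simp
  have ht1: "h t1 = Inl (vpt z)"
  proof (rule ccontr)
    assume "h t1 \<noteq> Inl (vpt z)"
    then have "h t1 = Inl (vpt q)" using T(6) by blast
    then have "t1 = ?t0" using pos_unique(2)[OF t1in] by simp
    then show False using T(2) tt(1) by simp
  qed
  have p1: "t1 = pos z" using pos_unique(2)[OF t1in ht1] .
  have ht2: "h t2 = Inl (vpt q)"
  proof (rule ccontr)
    assume "h t2 \<noteq> Inl (vpt q)"
    then have "h t2 = Inl (vpt z)" using T(7) by blast
    then have "t2 = pos z" using pos_unique(2)[OF t2in] by simp
    then show False using p1 T(2) T(3) by simp
  qed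
  have p2: "t2 = ?t0" using pos_unique(2)[OF t2in ht2] .
  have cons: "consecA VT ET h z q"
    unfolding consecA_def
  proof
    show "lessA VT ET h z q" unfolding lessA_def using q Eqz(2) p1 p2 T(2) T(3) by simp
    show "\<not> (\<exists>u. lessA VT ET h z u \<and> lessA VT ET h u q)"
    proof
      assume "\<exists>u. lessA VT ET h z u \<and> lessA VT ET h u q"
      then obtain u where u: "u \<in> sp" "pos z < pos u" "pos u < pos q" unfolding lessA_def by blast
      have "h (pos u) \<in> oedge q z" using T(5) u(2) u(3) p1 p2 by simp
      then show False using pos_props(2)[OF u(1)] vpt_notin_oedge[OF qz] by simp
    qed
  qed
  show ?thesis using cons Eqz(3) by blast
qed

lemma edge_in_range:
  assumes a: "a \<in> sp" and b: "b \<in> sp" and t: "pos a \<le> t" "t \<le> pos b"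
    and ue: "spine_E VT ET u z" "0 < s" "s < 1" "h t = Inl (ept u z s)"
  shows "pos a \<le> pos u \<and> pos u \<le> pos b \<and> pos a \<le> pos z \<and> pos z \<le> pos b"
proof -
  have Euz: "E u z" "u \<in> sp" "z \<in> sp" using spE[OF ue(1)] by simp_all
  have uz: "u \<noteq> z" using E_irr Euz(1) by blast
  have aa: "pos a \<in> {0..1}" "h (pos a) = Inl (vpt a)" using pos_props[OF a] by simp_all
  have bb: "pos b \<in> {0..1}" "h (pos b) = Inl (vpt b)" using pos_props[OF b] by simp_all
  have ht: "h t \<in> oedge u z" unfolding oedge_def using ue by blast
  have ha: "h (pos a) \<notin> oedge u z" using aa(2) vpt_notin_oedge[OF uz] by simp
  have hb: "h (pos b) \<notin> oedge u z" using bb(2) vpt_notin_oedge[OF uz] by simp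
  have "t \<noteq> pos a" using ht ha by blast
  then have at: "pos a < t" using t(1) by simp
  have "t \<noteq> pos b" using ht hb by blast
  then have tb: "t < pos b" using t(2) by simp
  have r: "0 \<le> pos a" "pos b \<le> 1" using aa(1) bb(1) by simp_all
  obtain t1 t2 where T: "pos a \<le> t1" "t1 < t" "t < t2" "t2 \<le> pos b"
     "h t1 = Inl (vpt u) \<or> h t1 = Inl (vpt z)" "h t2 = Inl (vpt u) \<or> h t2 = Inl (vpt z)"
    using edge_exit[OF Euz(1) r(1) at tb r(2) ht ha hb] by blast
  have t1in: "t1 \<in> {0..1}" using T(1,2) aa(1) tb bb(1) by simp
  have t2in: "t2 \<in> {0..1}" using T(3,4) at aa(1) bb(1) by simp
  have ne: "h t1 \<noteq> h t2" using hinj t1in t2in T(2,3) unfolding inj_on_def by force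
  have "(h t1 = Inl (vpt u) \<and> h t2 = Inl (vpt z)) \<or> (h t1 = Inl (vpt z) \<and> h t2 = Inl (vpt u))"
    using T(5,6) ne by auto
  then show ?thesis
  proof
    assume "h t1 = Inl (vpt u) \<and> h t2 = Inl (vpt z)"
    then have "t1 = pos u" "t2 = pos z" using pos_unique(2)[OF t1in] pos_unique(2)[OF t2in] by simp_all
    then show ?thesis using T by simp
  next
    assume "h t1 = Inl (vpt z) \<and> h t2 = Inl (vpt u)"
    then have "t1 = pos z" "t2 = pos u" using pos_unique(2)[OF t1in] pos_unique(2)[OF t2in] by simp_all
    then show ?thesis using T by simp
  qed
qed

end


context cat
begin

abbreviation "GG \<equiv> gclosure V E VT ET"

lemma leaf_nb:
  assumes "l \<in> LL" obtains q where "nbhd ET l = {q}"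
proof -
  have "card (nbhd ET l) = 1" using assms unfolding leaves_def by blast
  then show ?thesis using card_1_singletonE that by blast
qed

lemma leaf_VT: "l \<in> LL \<Longrightarrow> l \<in> VT" unfolding leaves_def by simp

lemma sub_pts_top: "subgraph_pts VF EF \<subseteq> topspace X"
  if "VF \<subseteq> V" "\<And>a b. EF a b \<Longrightarrow> E a b" for VF EF
proof
  fix p assume "p \<in> subgraph_pts VF EF"
  then obtain g where g: "p = Inl g" "g \<in> vertex_pts VF \<union> inner_edge_pts EF"
    unfolding subgraph_pts_def by blast
  then have "g \<in> complex_pts V E"
    unfolding complex_pts_def vertex_pts_def inner_edge_pts_def using that by blast
  then show "p \<in> topspace X" using Inl_topspace g by simp
qed

lemma vpt_in_G: "u \<in> VT \<Longrightarrow> Inl (vpt u) \<in> GG"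
proof -
  assume u: "u \<in> VT"
  have "subgraph_pts VT ET \<subseteq> topspace X" using sub_pts_top[of VT ET] VTV ET_E by blast
  then have "subgraph_pts VT ET \<subseteq> GG" unfolding gclosure_def by (rule closure_of_subset)
  moreover have "Inl (vpt u) \<in> subgraph_pts VT ET" unfolding subgraph_pts_def vertex_pts_def using u by blast
  ultimately show ?thesis by blast
qed

lemma G_Inl:
  assumes "Inl g \<in> GG"
  shows "(\<exists>u\<in>VT. g = vpt u) \<or> (\<exists>u z s. ET u z \<and> 0 < s \<and> s < 1 \<and> g = ept u z s)"
proof -
  have "\<And>a b. ET a b \<Longrightarrow> E a b \<and> a \<in> VT \<and> b \<in> VT \<and> ET b a"
    using ET_E ET_V ET_sym by blast
  moreover have "VT \<subseteq> V" using VTV by simp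
  ultimately show ?thesis using closure_Inl assms by blast
qed

lemma ball_G_sub:
  assumes x: "x \<in> VT" and nb: "nbhd ET x = {y}" and gG: "Inl g \<in> GG"
    and gb: "Inl g \<in> ballp V E (vpt x) (2/3)"
  shows "Inl g \<in> Pts V E {x, y}"
proof -
  have gc: "g \<in> complex_pts V E" using gb ballp_complex by blast
  from vball_cases[OF gb] show ?thesis
  proof
    assume "g = vpt x" then show ?thesis unfolding Pts_def using gc by simp
  next
    assume "\<exists>z s. E x z \<and> 0 < s \<and> s < 1 \<and> g = ept x z s"
    then obtain z s where zs: "E x z" "0 < s" "s < 1" "g = ept x z s" by blast
    have xz: "x \<noteq> z" using E_irr zs(1) by blast
    have sg: "supp g = {x, z}" using supp_ept[OF xz zs(2) zs(3)] zs(4) by simp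
    from G_Inl[OF gG] have "ET x z"
    proof
      assume "\<exists>u\<in>VT. g = vpt u"
      then obtain u where "g = vpt u" by blast
      then show ?thesis using vpt_ne_ept[OF xz zs(2) zs(3), of u] zs(4) by simp
    next
      assume "\<exists>u w s. ET u w \<and> 0 < s \<and> s < 1 \<and> g = ept u w s"
      then obtain c d s' where cd: "ET c d" "0 < s'" "s' < 1" "g = ept c d s'" by blast
      have cd': "c \<noteq> d" using E_irr ET_E cd(1) by blast
      have "supp g = {c, d}" using supp_ept[OF cd' cd(2) cd(3)] cd(4) by simp
      then have "{c, d} = {x, z}" using sg by simp
      then have "(c = x \<and> d = z) \<or> (c = z \<and> d = x)" by (simp add: doubleton_eq_iff)
      then show ?thesis using cd(1) ET_sym by blast
    qed
    then have "z \<in> nbhd ET x" unfolding nbhd_def by simp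
    then have "z = y" using nb by simp
    then show ?thesis unfolding Pts_def using gc sg by simp
  qed
qed

lemma Pts_pair_ball:
  assumes "E l q" "p \<in> Pts V E {l, q}"
  shows "p \<in> ballp V E (vpt l) (2/3) \<union> ballp V E (vpt q) (2/3)"
proof (cases "p \<in> oedge l q")
  case True
  then obtain t where t: "p = Inl (ept l q t)" "0 < t" "t < 1" unfolding oedge_def by blast
  have lq: "l \<noteq> q" using E_irr assms(1) by blast
  show ?thesis
  proof (cases "1/2 \<le> t")
    case True
    then show ?thesis using ballmem[OF assms(1) True t(3)] t(1) by blast
  next
    case False
    have "ept l q t = ept q l (1 - t)" using ept_swap[OF lq] by simp
    moreover have "1/2 \<le> 1 - t" "1 - t < 1" using False t(2) by simp_all
    moreover have "E q l" using E_sym assms(1) by blast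
    ultimately show ?thesis using ballmem[of q l "1 - t"] t(1) by simp
  qed
next
  case False
  then have "p = Inl (vpt l) \<or> p = Inl (vpt q)" using Pts_edge_cases[OF assms] by blast
  moreover have "vpt l \<in> complex_pts V E" "vpt q \<in> complex_pts V E"
    using E_V[OF assms(1)] vpt_complex by blast+
  ultimately show ?thesis using center_in_ballp[of _ "2/3"] by auto
qed

lemma sp_nonempty: "sp \<noteq> {}"
proof
  assume e: "sp = {}"
  have "spine_E VT ET = (\<lambda>a b. False)"
  proof (intro ext)
    fix a b show "spine_E VT ET a b = False" using spE[of a b] e by blast
  qed
  then have "subgraph_pts sp (spine_E VT ET) = {}"
    using e unfolding subgraph_pts_def vertex_pts_def inner_edge_pts_def by simp
  then have "AA = {}" unfolding gclosure_def by simp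
  moreover have "h 0 \<in> AA" using hA by simp
  ultimately show False by simp
qed

lemma leaf_nbr_spine:
  assumes l: "l \<in> LL" and lq: "ET l q"
  shows "q \<in> sp"
proof (rule ccontr)
  assume qn: "q \<notin> sp"
  have qV: "q \<in> VT" using ET_V lq by blast
  then have qL: "q \<in> LL" using qn unfolding spine_V_def by blast
  have lV: "l \<in> VT" using leaf_VT l .
  obtain y where ny: "nbhd ET l = {y}" using leaf_nb l by blast
  have "q \<in> nbhd ET l" using lq unfolding nbhd_def by simp
  then have nl: "nbhd ET l = {q}" using ny by simp
  obtain y' where ny': "nbhd ET q = {y'}" using leaf_nb qL by blast
  have "l \<in> nbhd ET q" using ET_sym lq unfolding nbhd_def by simp
  then have nq: "nbhd ET q = {l}" using ny' by simp
  have Elq: "E l q" using ET_E lq .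
  let ?D = "Pts V E {l, q}"
  let ?U = "ballp V E (vpt l) (2/3) \<union> ballp V E (vpt q) (2/3)"
  have Dc: "closedin X ?D" using Pts_closed[of "{l, q}"] E_V[OF Elq] by simp
  have Uo: "openin X ?U"
    using openin_ballp vpt_complex E_V[OF Elq] by (intro openin_Un) auto
  have GU: "p \<in> ?D" if pG: "p \<in> GG" and pU: "p \<in> ?U" for p
  proof -
    obtain g where g: "p = Inl g" using pU unfolding ballp_def by blast
    show ?thesis
    proof (cases "p \<in> ballp V E (vpt l) (2/3)")
      case True
      then show ?thesis using ball_G_sub[OF lV nl] pG g by simp
    next
      case False
      then have "p \<in> ballp V E (vpt q) (2/3)" using pU by blast
      then have "p \<in> Pts V E {q, l}" using ball_G_sub[OF qV nq] pG g by simp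
      moreover have "{q, l} = {l, q}" by blast
      ultimately show ?thesis by simp
    qed
  qed
  obtain z where z: "z \<in> sp" using sp_nonempty by blast
  have zV: "z \<in> VT" using z unfolding spine_V_def by simp
  have zl: "Inl (vpt l) \<noteq> Inl (vpt z)"
  proof
    assume "Inl (vpt l) = Inl (vpt z)"
    then have "vpt l = vpt z" by simp
    then have "l = z" by (rule vpt_inj)
    then show False using z l unfolding spine_V_def by simp
  qed
  have ac: "arc_connected_set X GG" using tc unfolding top_caterpillar_def by blast
  have "\<exists>A h. A \<subseteq> GG \<and> arc_param X A h \<and> h 0 = Inl (vpt l) \<and> h 1 = Inl (vpt z)"
    using ac[unfolded arc_connected_set_def, rule_format, OF vpt_in_G[OF lV] vpt_in_G[OF zV] zl] .
  then obtain A' h' where A': "A' \<subseteq> GG" "arc_param X A' h'" "h' 0 = Inl (vpt l)" "h' 1 = Inl (vpt z)"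
    by (elim exE conjE)
  have hom': "homeomorphic_map (top_of_set {0..1}) (subtopology X A') h'"
    using A'(2) unfolding arc_param_def .
  have hc': "continuous_map (top_of_set {0..1}) X h'"
    using homeomorphic_imp_continuous_map[OF hom'] continuous_map_in_subtopology by blast
  have hG: "h' s \<in> GG" if "s \<in> {0..1}" for s
  proof -
    have "h' s \<in> topspace (subtopology X A')"
      using homeomorphic_imp_surjective_map[OF hom'] that by force
    then show ?thesis using A'(1) by auto
  qed
  define f where "f s = (h' s \<in> ?D)" for s
  have loc: "\<forall>a\<in>{0..1}. eventually (\<lambda>b. f a = f b) (at a within {0..1})"
  proof
    fix a :: real assume a: "a \<in> {0..1}"
    show "eventually (\<lambda>b. f a = f b) (at a within {0..1})"
    proof (cases "f a")
      case True
      then have "h' a \<in> ?U" using Pts_pair_ball[OF Elq] unfolding f_def by blast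
      then obtain d where d: "d > 0" "\<forall>s\<in>{0..1}. \<bar>s - a\<bar> < d \<longrightarrow> h' s \<in> ?U"
        using cont_nbhd[OF hc' Uo a] by blast
      have "\<forall>s\<in>{0..1}. \<bar>s - a\<bar> < d \<longrightarrow> f a = f s"
      proof (intro ballI impI)
        fix s :: real assume s: "s \<in> {0..1}" "\<bar>s - a\<bar> < d"
        have "h' s \<in> ?D" using GU[OF hG[OF s(1)]] d(2) s by blast
        then show "f a = f s" using True unfolding f_def by simp
      qed
      then show ?thesis by (rule ev_within[OF d(1)])
    next
      case False
      have "h' a \<in> topspace X" using cont_topspace[OF hc' a] .
      then have "h' a \<in> topspace X - ?D" using False unfolding f_def by simp
      moreover have "openin X (topspace X - ?D)" using Dc by (simp add: closedin_def)
      ultimately obtain d where d: "d > 0" "\<forall>s\<in>{0..1}. \<bar>s - a\<bar> < d \<longrightarrow> h' s \<in> topspace X - ?D"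
        using cont_nbhd[OF hc', of "topspace X - ?D" a] a by blast
      have "\<forall>s\<in>{0..1}. \<bar>s - a\<bar> < d \<longrightarrow> f a = f s"
      proof (intro ballI impI)
        fix s :: real assume s: "s \<in> {0..1}" "\<bar>s - a\<bar> < d"
        have "h' s \<notin> ?D" using d(2) s by blast
        then show "f a = f s" using False unfolding f_def by simp
      qed
      then show ?thesis by (rule ev_within[OF d(1)])
    qed
  qed
  have "f 0 = f 1"
    using connected_local_const[OF connected_Icc _ _ loc] by simp
  moreover have "f 0" unfolding f_def using A'(3) vpt_complex E_V[OF Elq] unfolding Pts_def by auto
  moreover have "\<not> f 1"
  proof
    assume "f 1"
    then have "supp (vpt z) \<subseteq> {l, q}" unfolding f_def Pts_def using A'(4) by auto
    then have "z = l \<or> z = q" by simp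
    then show False using z l qL unfolding spine_V_def by auto
  qed
  ultimately show False by simp
qed

end


context cat
begin

abbreviation "cls \<equiv> clsT VT ET h"
abbreviation "PT \<equiv> partT VT ET h"
definition "Pw v' w' = insert w' (nbhd ET v' \<inter> LL)"
definition "Pp m = nbhd ET m \<inter> LL"

lemma sp_notL: "u \<in> sp \<Longrightarrow> u \<notin> LL" unfolding spine_V_def by simp
lemma sp_VT: "u \<in> sp \<Longrightarrow> u \<in> VT" unfolding spine_V_def by simp
lemma VT_cases: "u \<in> VT \<Longrightarrow> u \<in> sp \<or> u \<in> LL" unfolding spine_V_def by blast

lemma lessA_iff: "lessA VT ET h u v \<longleftrightarrow> u \<in> sp \<and> v \<in> sp \<and> pos u < pos v"
  unfolding lessA_def by simp

lemma consec_less: "consecA VT ET h v w \<Longrightarrow> v \<in> sp \<and> w \<in> sp \<and> pos v < pos w"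
  unfolding consecA_def lessA_iff by blast

lemma consec_none: "consecA VT ET h v w \<Longrightarrow> u \<in> sp \<Longrightarrow> pos v < pos u \<Longrightarrow> pos u < pos w \<Longrightarrow> False"
  unfolding consecA_def lessA_iff by blast

lemma consec_uniq_l:
  assumes "consecA VT ET h v1 w" "consecA VT ET h v2 w" shows "v1 = v2"
proof -
  have a: "v1 \<in> sp" "w \<in> sp" "pos v1 < pos w" using consec_less[OF assms(1)] by simp_all
  have b: "v2 \<in> sp" "pos v2 < pos w" using consec_less[OF assms(2)] by simp_all
  have "\<not> pos v1 < pos v2" using consec_none[OF assms(1) b(1)] b(2) by blast
  moreover have "\<not> pos v2 < pos v1" using consec_none[OF assms(2) a(1)] a(3) by blast
  ultimately have "pos v1 = pos v2" by simp
  then show ?thesis using pos_inj a(1) b(1) by blast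
qed

lemma consec_uniq_r:
  assumes "consecA VT ET h v w1" "consecA VT ET h v w2" shows "w1 = w2"
proof -
  have a: "v \<in> sp" "w1 \<in> sp" "pos v < pos w1" using consec_less[OF assms(1)] by simp_all
  have b: "w2 \<in> sp" "pos v < pos w2" using consec_less[OF assms(2)] by simp_all
  have "\<not> pos w1 < pos w2" using consec_none[OF assms(2) a(2)] a(3) by blast
  moreover have "\<not> pos w2 < pos w1" using consec_none[OF assms(1) b(1)] b(2) by blast
  ultimately have "pos w1 = pos w2" by simp
  then show ?thesis using pos_inj a(2) b(1) by blast
qed

lemma max_uniq: "maxA VT ET h m1 \<Longrightarrow> maxA VT ET h m2 \<Longrightarrow> m1 = m2"
  unfolding maxA_def lessA_iff using pos_inj by (meson linorder_neqE_linordered_idom)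

lemma min_uniq: "minA VT ET h m1 \<Longrightarrow> minA VT ET h m2 \<Longrightarrow> m1 = m2"
  unfolding minA_def lessA_iff using pos_inj by (meson linorder_neqE_linordered_idom)

lemma max_consec: "maxA VT ET h m \<Longrightarrow> consecA VT ET h m w \<Longrightarrow> False"
  unfolding maxA_def consecA_def by blast

lemma min_consec: "minA VT ET h s \<Longrightarrow> consecA VT ET h v s \<Longrightarrow> False"
  unfolding minA_def consecA_def by blast

lemma leaf_uniq:
  assumes "l \<in> LL" "ET a l" "ET b l" shows "a = b"
proof -
  obtain q where q: "nbhd ET l = {q}" using leaf_nb assms(1) by blast
  have "a \<in> nbhd ET l" "b \<in> nbhd ET l" using assms(2,3) ET_sym unfolding nbhd_def by auto
  then show ?thesis using q by simp
qed

lemma PT_cases: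
  assumes "P \<in> PT"
  obtains (w) v' w' where "consecA VT ET h v' w'" "P = Pw v' w'"
  | (p) m where "maxA VT ET h m" "P = Pp m"
  | (s) s where "minA VT ET h s" "P = {s}"
  using assms unfolding partT_def Pw_def Pp_def by blast

lemma Pw_in: "consecA VT ET h v' w' \<Longrightarrow> Pw v' w' \<in> PT"
  unfolding partT_def Pw_def by blast
lemma Pp_in: "maxA VT ET h m \<Longrightarrow> Pp m \<in> PT"
  unfolding partT_def Pp_def by blast
lemma Ps_in: "minA VT ET h s \<Longrightarrow> {s} \<in> PT"
  unfolding partT_def by blast

lemma Pw_mem: "u \<in> Pw v' w' \<longleftrightarrow> u = w' \<or> (ET v' u \<and> u \<in> LL)"
  unfolding Pw_def nbhd_def by auto
lemma Pp_mem: "u \<in> Pp m \<longleftrightarrow> ET m u \<and> u \<in> LL"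
  unfolding Pp_def nbhd_def by auto

lemma Pp_nosp: "u \<in> sp \<Longrightarrow> u \<notin> Pp m"
  using Pp_mem sp_notL by blast

lemma PT_elem_VT:
  assumes "P \<in> PT" "u \<in> P" shows "u \<in> VT"
  using assms(1)
proof (cases rule: PT_cases)
  case (w v' w')
  then show ?thesis using assms(2) Pw_mem consec_less sp_VT leaves_def by (metis (no_types, lifting) mem_Collect_eq)
next
  case (p m) then show ?thesis using assms(2) Pp_mem leaves_def by (metis (no_types, lifting) mem_Collect_eq)
next
  case (s s)
  then have "s \<in> sp" unfolding minA_def by simp
  then show ?thesis using assms(2) s(2) sp_VT by simp
qed

lemma class_unique:
  assumes P: "P \<in> PT" and Q: "Q \<in> PT" and uP: "u \<in> P" and uQ: "u \<in> Q"
  shows "P = Q"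
  using P
proof (cases rule: PT_cases)
  case (w v1 w1)
  have c1: "v1 \<in> sp" "w1 \<in> sp" using consec_less[OF w(1)] by simp_all
  from Q show ?thesis
  proof (cases rule: PT_cases)
    case (w v2 w2)
    have c2: "v2 \<in> sp" "w2 \<in> sp" using consec_less[OF w(1)] by simp_all
    have m1: "u = w1 \<or> (ET v1 u \<and> u \<in> LL)" using uP \<open>P = Pw v1 w1\<close> Pw_mem by simp
    have m2: "u = w2 \<or> (ET v2 u \<and> u \<in> LL)" using uQ w(2) Pw_mem by simp
    show ?thesis
    proof (cases "u \<in> LL")
      case True
      then have "ET v1 u" "ET v2 u" using m1 m2 sp_notL c1 c2 by auto
      then have "v1 = v2" using leaf_uniq True by blast
      then have "w1 = w2" using consec_uniq_r \<open>consecA VT ET h v1 w1\<close> w(1) by blast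
      then show ?thesis using \<open>P = Pw v1 w1\<close> w(2) \<open>v1 = v2\<close> by simp
    next
      case False
      then have "u = w1" "u = w2" using m1 m2 by auto
      then have "v1 = v2" using consec_uniq_l \<open>consecA VT ET h v1 w1\<close> w(1) by blast
      then show ?thesis using \<open>P = Pw v1 w1\<close> w(2) \<open>u = w1\<close> \<open>u = w2\<close> by simp
    qed
  next
    case (p m)
    have "ET m u" "u \<in> LL" using uQ p(2) Pp_mem by simp_all
    then have "u \<noteq> w1" using sp_notL c1 by blast
    then have "ET v1 u" using uP w(2) Pw_mem by simp
    then have "v1 = m" using leaf_uniq \<open>u \<in> LL\<close> \<open>ET m u\<close> by blast
    then show ?thesis using max_consec p(1) w(1) by blast
  next
    case (s s)
    have "u = s" using uQ s(2) by simp
    then have "u \<in> sp" using s(1) unfolding minA_def by simp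
    then have "u = w1" using uP w(2) Pw_mem sp_notL by blast
    then show ?thesis using min_consec s(1) w(1) \<open>u = s\<close> by blast
  qed
next
  case (p m1)
  have um: "ET m1 u" "u \<in> LL" using uP p(2) Pp_mem by simp_all
  from Q show ?thesis
  proof (cases rule: PT_cases)
    case (w v2 w2)
    have c2: "w2 \<in> sp" using consec_less[OF w(1)] by simp
    then have "u \<noteq> w2" using sp_notL um by blast
    then have "ET v2 u" using uQ w(2) Pw_mem by simp
    then have "v2 = m1" using leaf_uniq um by blast
    then show ?thesis using max_consec p(1) w(1) by blast
  next
    case (p m2)
    then show ?thesis using max_uniq \<open>maxA VT ET h m1\<close> \<open>P = Pp m1\<close> by blast
  next
    case (s s)
    have "u = s" using uQ s(2) by simp
    then have "u \<in> sp" using s(1) unfolding minA_def by simp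
    then show ?thesis using um sp_notL by blast
  qed
next
  case (s s1)
  have us: "u = s1" "u \<in> sp" using uP s(1) s(2) unfolding minA_def by simp_all
  from Q show ?thesis
  proof (cases rule: PT_cases)
    case (w v2 w2)
    have "u = w2" using uQ w(2) Pw_mem sp_notL us(2) by blast
    then show ?thesis using min_consec s(1) w(1) us(1) by blast
  next
    case (p m)
    then show ?thesis using uQ Pp_nosp us(2) by blast
  next
    case (s s2)
    then show ?thesis using uQ us(1) \<open>P = {s1}\<close> by simp
  qed
qed

lemma cls_eq: "P \<in> PT \<Longrightarrow> u \<in> P \<Longrightarrow> cls u = P"
  unfolding clsT_def using class_unique by (intro the_equality) blast+

lemma class_exists:
  assumes u: "u \<in> VT" shows "\<exists>P\<in>PT. u \<in> P"
proof (cases "u \<in> sp")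
  case True
  show ?thesis
  proof (cases "minA VT ET h u")
    case True
    then show ?thesis using Ps_in by blast
  next
    case False
    then obtain b where "lessA VT ET h b u" using \<open>u \<in> sp\<close> unfolding minA_def by blast
    then have "b \<in> sp" "pos b < pos u" using lessA_iff by simp_all
    then obtain z where "consecA VT ET h z u" using pred_exists[OF \<open>u \<in> sp\<close>] by blast
    then show ?thesis using Pw_in Pw_mem by blast
  qed
next
  case False
  then have uL: "u \<in> LL" using VT_cases u by blast
  obtain q where q: "nbhd ET u = {q}" using leaf_nb uL by blast
  then have "ET u q" unfolding nbhd_def by auto
  then have qs: "q \<in> sp" and qu: "ET q u" using leaf_nbr_spine uL ET_sym by blast+
  show ?thesis
  proof (cases "maxA VT ET h q")
    case True
    then show ?thesis using Pp_in Pp_mem qu uL by blast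
  next
    case False
    then obtain b where "lessA VT ET h q b" using qs unfolding maxA_def by blast
    then have "b \<in> sp" "pos q < pos b" using lessA_iff by simp_all
    then obtain z where "consecA VT ET h q z" using succ_exists[OF qs] by blast
    then show ?thesis using Pw_in Pw_mem qu uL by blast
  qed
qed

lemma cls_props: "u \<in> VT \<Longrightarrow> u \<in> cls u \<and> cls u \<in> PT"
  using class_exists cls_eq by metis

lemma sp_same_class:
  assumes "P \<in> PT" "u \<in> P" "u' \<in> P" "u \<in> sp" "u' \<in> sp" shows "u = u'"
  using assms(1)
proof (cases rule: PT_cases)
  case (w v' w')
  then show ?thesis using assms(2-5) Pw_mem sp_notL by metis
next
  case (p m) then show ?thesis using assms Pp_nosp by blast
next
  case (s s) then show ?thesis using assms by simp
qed

lemma leaf_class: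
  assumes "x \<in> LL" "P \<in> PT" "x \<in> P" "ET x q"
  shows "(\<exists>w'. consecA VT ET h q w' \<and> P = Pw q w') \<or> (maxA VT ET h q \<and> P = Pp q)"
  using assms(2)
proof (cases rule: PT_cases)
  case (w v' w')
  have "w' \<in> sp" using consec_less[OF w(1)] by simp
  then have "x \<noteq> w'" using assms(1) sp_notL by blast
  then have "ET v' x" using assms(3) w(2) Pw_mem by simp
  then have "v' = q" using leaf_uniq[OF assms(1)] assms(4) ET_sym by blast
  then show ?thesis using w by blast
next
  case (p m)
  have "ET m x" using assms(3) p(2) Pp_mem by simp
  then have "m = q" using leaf_uniq[OF assms(1)] assms(4) ET_sym by blast
  then show ?thesis using p by blast
next
  case (s s)
  then have "x \<in> sp" using assms(3) unfolding minA_def by simp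
  then show ?thesis using assms(1) sp_notL by blast
qed

end


context cat
begin

definition "rep u = (if u \<in> sp then u else (THE q. ET u q))"

lemma rep_props:
  assumes "u \<in> VT"
  shows "rep u \<in> sp" "u \<in> sp \<Longrightarrow> rep u = u" "u \<notin> sp \<Longrightarrow> ET u (rep u) \<and> u \<in> LL"
proof -
  show "u \<in> sp \<Longrightarrow> rep u = u" unfolding rep_def by simp
  have leafcase: "ET u (rep u) \<and> u \<in> LL \<and> rep u \<in> sp" if ns: "u \<notin> sp"
  proof -
    have uL: "u \<in> LL" using VT_cases assms ns by blast
    obtain q where q: "nbhd ET u = {q}" using leaf_nb uL by blast
    have uq: "ET u q" using q unfolding nbhd_def by auto
    have uq': "q' = q" if "ET u q'" for q'
    proof -
      have "q' \<in> nbhd ET u" using that unfolding nbhd_def by simp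
      then show ?thesis using q by simp
    qed
    have "(THE q. ET u q) = q" by (rule the_equality[of "\<lambda>q. ET u q", OF uq uq'])
    then have "rep u = q" unfolding rep_def using ns by simp
    then show ?thesis using uq uL leaf_nbr_spine[OF uL uq] by simp
  qed
  show "u \<notin> sp \<Longrightarrow> ET u (rep u) \<and> u \<in> LL" using leafcase by blast
  show "rep u \<in> sp"
  proof (cases "u \<in> sp")
    case True then show ?thesis unfolding rep_def by simp
  next
    case False then show ?thesis using leafcase by blast
  qed
qed

lemma cls_sp: "z \<in> sp \<Longrightarrow> z \<in> cls z \<and> cls z \<in> PT"
  using cls_props sp_VT by blast

lemma Pp_eq: "nbhd ET m \<inter> LL = Pp m" unfolding Pp_def by simp

lemma lessT_Pp_left:
  assumes "lessT VT ET h (Pp m) Q" "maxA VT ET h m" shows False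
proof -
  from assms(1)[unfolded lessT_def Pp_eq] show False
  proof (elim disjE exE conjE)
    fix v' w' assume "lessA VT ET h v' w'" "Pp m = cls v'"
    then have "v' \<in> sp" using lessA_iff by simp
    then have "v' \<in> Pp m" using cls_sp \<open>Pp m = cls v'\<close> by simp
    then show False using Pp_nosp \<open>v' \<in> sp\<close> by blast
  next
    fix s assume "minA VT ET h s" "Pp m = {s}"
    then have "s \<in> sp" "s \<in> Pp m" unfolding minA_def by simp_all
    then show False using Pp_nosp by blast
  next
    fix m' assume M: "maxA VT ET h m'" "Q = Pp m'" "Pp m \<noteq> Q"
    have "m = m'" using max_uniq[OF assms(2) M(1)] .
    then show False using M(2,3) by simp
  qed
qed

lemma LB:
  assumes hvx: "lessT VT ET h (cls v) (cls x)" and hxw: "lessT VT ET h (cls x) (cls w)"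
    and x: "x \<in> VT" and z: "z \<in> sp" and pz: "pos (rep x) \<le> pos z"
  shows "leT VT ET h (cls v) (cls z)"
proof -
  have xc: "x \<in> cls x" "cls x \<in> PT" using cls_props x by simp_all
  have zc: "z \<in> cls z" "cls z \<in> PT" using cls_sp z by simp_all
  from hvx[unfolded lessT_def Pp_eq] show ?thesis
  proof (elim disjE exE conjE)
    fix v1 x1 assume A: "lessA VT ET h v1 x1" "cls v = cls v1" "cls x = cls x1"
    have v1: "v1 \<in> sp" "x1 \<in> sp" "pos v1 < pos x1" using A(1) lessA_iff by simp_all
    have x1c: "x1 \<in> cls x" using A(3) cls_sp v1(2) by simp
    have "pos v1 \<le> pos (rep x)"
    proof (cases "x \<in> sp")
      case True
      have "x = x1" using sp_same_class[OF xc(2) xc(1) x1c True v1(2)] .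
      then show ?thesis using rep_props(2)[OF x True] v1(3) by simp
    next
      case False
      then have xl: "ET x (rep x)" "x \<in> LL" using rep_props(3)[OF x] by simp_all
      from leaf_class[OF xl(2) xc(2) xc(1) xl(1)] show ?thesis
      proof
        assume "\<exists>w'. consecA VT ET h (rep x) w' \<and> cls x = Pw (rep x) w'"
        then obtain w' where w': "consecA VT ET h (rep x) w'" "cls x = Pw (rep x) w'" by blast
        have "x1 = w'" using x1c w'(2) Pw_mem sp_notL v1(2) by blast
        then show ?thesis using consec_none[OF w'(1) v1(1)] v1(3) by force
      next
        assume "maxA VT ET h (rep x) \<and> cls x = Pp (rep x)"
        then show ?thesis using x1c Pp_nosp v1(2) by blast
      qed
    qed
    then have "pos v1 \<le> pos z" using pz by simp
    then show ?thesis
    proof (cases "pos v1 = pos z")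
      case True
      then have "v1 = z" using pos_inj v1(1) z by blast
      then show ?thesis unfolding leT_def using A(2) by simp
    next
      case False
      then have "lessA VT ET h v1 z" using lessA_iff v1(1) z \<open>pos v1 \<le> pos z\<close> by simp
      then show ?thesis unfolding leT_def lessT_def using A(2) by blast
    qed
  next
    fix s assume S: "minA VT ET h s" "cls v = {s}"
    show ?thesis
    proof (cases "z = s")
      case True
      then have "cls z = {s}" using cls_eq Ps_in S(1) by simp
      then show ?thesis unfolding leT_def using S(2) by simp
    next
      case False
      then have "cls z \<noteq> {s}" using zc(1) by auto
      then show ?thesis unfolding leT_def lessT_def using S zc(2) by blast
    qed
  next
    fix m assume "maxA VT ET h m" "cls x = Pp m"
    then show ?thesis using lessT_Pp_left hxw by metis
  qed
qed

lemma UB: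
  assumes hyw: "lessT VT ET h (cls y) (cls w)"
    and y: "y \<in> VT" and z: "z \<in> sp" and pz: "pos z \<le> pos (rep y)"
  shows "leT VT ET h (cls z) (cls w)"
proof -
  have yc: "y \<in> cls y" "cls y \<in> PT" using cls_props y by simp_all
  have zc: "z \<in> cls z" "cls z \<in> PT" using cls_sp z by simp_all
  from hyw[unfolded lessT_def Pp_eq] show ?thesis
  proof (elim disjE exE conjE)
    fix y1 w1 assume A: "lessA VT ET h y1 w1" "cls y = cls y1" "cls w = cls w1"
    have y1: "y1 \<in> sp" "w1 \<in> sp" "pos y1 < pos w1" using A(1) lessA_iff by simp_all
    have y1c: "y1 \<in> cls y" using A(2) cls_sp y1(1) by simp
    have "pos (rep y) < pos w1"
    proof (cases "y \<in> sp")
      case True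
      have "y = y1" using sp_same_class[OF yc(2) yc(1) y1c True y1(1)] .
      then show ?thesis using rep_props(2)[OF y True] y1(3) by simp
    next
      case False
      then have yl: "ET y (rep y)" "y \<in> LL" using rep_props(3)[OF y] by simp_all
      from leaf_class[OF yl(2) yc(2) yc(1) yl(1)] show ?thesis
      proof
        assume "\<exists>w'. consecA VT ET h (rep y) w' \<and> cls y = Pw (rep y) w'"
        then obtain w' where w': "consecA VT ET h (rep y) w'" "cls y = Pw (rep y) w'" by blast
        have "y1 = w'" using y1c w'(2) Pw_mem sp_notL y1(1) by blast
        then show ?thesis using consec_less[OF w'(1)] y1(3) by simp
      next
        assume "maxA VT ET h (rep y) \<and> cls y = Pp (rep y)"
        then show ?thesis using y1c Pp_nosp y1(1) by blast
      qed
    qed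
    then have "lessA VT ET h z w1" using lessA_iff z y1(2) pz by simp
    then show ?thesis unfolding leT_def lessT_def using A(3) by blast
  next
    fix s assume S: "minA VT ET h s" "cls y = {s}" "cls w \<in> PT" "cls w \<noteq> cls y"
    have "y = s" using yc(1) S(2) by simp
    then have ys: "y \<in> sp" using S(1) unfolding minA_def by simp
    then have "rep y = s" using rep_props(2)[OF y] \<open>y = s\<close> by simp
    have "z = s"
    proof (rule ccontr)
      assume "z \<noteq> s"
      then have "pos z \<noteq> pos s" using pos_inj z ys \<open>y = s\<close> by blast
      then have "lessA VT ET h z s" using lessA_iff z ys \<open>y = s\<close> pz \<open>rep y = s\<close> by simp
      then show False using S(1) unfolding minA_def by blast
    qed
    then have "cls z = cls y" using \<open>y = s\<close> by simp
    then show ?thesis unfolding leT_def using hyw by simp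
  next
    fix m assume M: "maxA VT ET h m" "cls w = Pp m"
    have "cls z \<noteq> Pp m" using zc(1) Pp_nosp z by blast
    then show ?thesis unfolding leT_def lessT_def Pp_eq using M zc(2) by blast
  qed
qed

end


lemma rtc_RW_mono:
  assumes "(RW E W)\<^sup>*\<^sup>* a b" "W \<subseteq> W'" shows "(RW E W')\<^sup>*\<^sup>* a b"
  using assms(1)
proof (induction rule: rtranclp_induct)
  case base then show ?case by simp
next
  case (step m n)
  have "RW E W' m n" using step(2) assms(2) unfolding RW_def by auto
  then show ?case using rtranclp.rtrancl_into_rtrancl[OF step.IH] by simp
qed

locale mainL = cat V E VT ET h for V :: "'a set" and E VT ET h +
  fixes v w x y :: 'a
  assumes vV: "v \<in> V" and wV: "w \<in> V" and xV: "x \<in> V" and yV: "y \<in> V"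
    and hvx: "lessT VT ET h (clsT VT ET h v) (clsT VT ET h x)"
    and hxw: "lessT VT ET h (clsT VT ET h x) (clsT VT ET h w)"
    and hvy: "lessT VT ET h (clsT VT ET h v) (clsT VT ET h y)"
    and hyw: "lessT VT ET h (clsT VT ET h y) (clsT VT ET h w)"
    and ord: "arc_pos h (rep x) \<le> arc_pos h (rep y)"
begin

abbreviation "II \<equiv> interval_I VT ET h v w"
abbreviation "pa \<equiv> pos (rep x)"
abbreviation "pb \<equiv> pos (rep y)"
definition "KK = {z. path_in E II x z}"

lemma xVT: "x \<in> VT" and yVT: "y \<in> VT" using xV yV VTV by simp_all

lemma a_sp: "rep x \<in> sp" and b_sp: "rep y \<in> sp"
  using rep_props(1) xVT yVT by simp_all

lemma pa01: "pa \<in> {0..1}" and pb01: "pb \<in> {0..1}"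
  using pos_props(1) a_sp b_sp by simp_all

lemma in_II:
  assumes "u \<in> VT" "z \<in> cls u" "leT VT ET h (cls v) (cls u)" "leT VT ET h (cls u) (cls w)"
  shows "z \<in> II"
proof -
  have "cls u \<in> {clsT VT ET h u | u. u \<in> VT \<and>
       leT VT ET h (clsT VT ET h v) (clsT VT ET h u) \<and> leT VT ET h (clsT VT ET h u) (clsT VT ET h w)}"
    using assms(1,3,4) by blast
  then show ?thesis unfolding interval_I_def using assms(2) by (rule UnionI)
qed

lemma RC:
  assumes z: "z \<in> sp" and r: "pa \<le> pos z" "pos z \<le> pb" shows "z \<in> II"
proof -
  have "leT VT ET h (cls v) (cls z)" using LB[OF hvx hxw xVT z r(1)] .
  moreover have "leT VT ET h (cls z) (cls w)" using UB[OF hyw yVT z r(2)] .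
  ultimately show ?thesis using in_II[of z z] cls_sp[OF z] sp_VT[OF z] by blast
qed

lemma leaf_in:
  assumes l: "l \<in> LL" and lq: "ET l q" and q: "q \<in> sp" and r: "pa \<le> pos q" "pos q < pb"
  shows "l \<in> II"
proof -
  obtain w' where w': "consecA VT ET h q w'" "spine_E VT ET q w'"
    using succ_exists[OF q b_sp r(2)] by blast
  have ws: "w' \<in> sp" "pos q < pos w'" using consec_less[OF w'(1)] by simp_all
  have "pos w' \<le> pb"
  proof (rule ccontr)
    assume "\<not> pos w' \<le> pb"
    then show False using consec_none[OF w'(1) b_sp] r(2) by simp
  qed
  then have wI: "leT VT ET h (cls v) (cls w') \<and> leT VT ET h (cls w') (cls w)"
    using LB[OF hvx hxw xVT ws(1)] UB[OF hyw yVT ws(1)] r(1) ws(2) by simp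
  have "l \<in> Pw q w'" unfolding Pw_mem using ET_sym[OF lq] l by simp
  moreover have "w' \<in> Pw q w'" unfolding Pw_mem by simp
  then have "cls w' = Pw q w'" using cls_eq[OF Pw_in[OF w'(1)]] by simp
  ultimately show ?thesis using in_II[of w' l] wI ws(1) sp_VT by simp
qed

lemma x_II: "x \<in> II"
  using in_II[of x x] cls_props[OF xVT] hvx hxw xVT unfolding leT_def by simp
lemma y_II: "y \<in> II"
  using in_II[of y y] cls_props[OF yVT] hvy hyw yVT unfolding leT_def by simp

lemma a_K: "rep x \<in> KK"
proof -
  have aI: "rep x \<in> II" using RC[OF a_sp] ord by simp
  show ?thesis
  proof (cases "x \<in> sp")
    case True
    then show ?thesis unfolding KK_def using rep_props(2)[OF xVT True] path_in_refl x_II by simp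
  next
    case False
    then have "ET x (rep x)" using rep_props(3)[OF xVT] by simp
    then have "E x (rep x)" by (rule ET_E)
    then show ?thesis unfolding KK_def using path_in_edge[of E x "rep x" II] x_II aI by simp
  qed
qed

lemma b_K_y: "rep y \<in> KK \<Longrightarrow> y \<in> KK"
proof -
  assume bK: "rep y \<in> KK"
  show ?thesis
  proof (cases "y \<in> sp")
    case True
    then show ?thesis using bK rep_props(2)[OF yVT True] by simp
  next
    case False
    then have "ET y (rep y)" using rep_props(3)[OF yVT] by simp
    then have "E (rep y) y" using ET_E E_sym by blast
    then show ?thesis using bK path_in_step[of E II x "rep y" y] y_II unfolding KK_def by simp
  qed
qed

lemma K_step: "c \<in> KK \<Longrightarrow> E c d \<Longrightarrow> d \<in> II \<Longrightarrow> d \<in> KK"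
  unfolding KK_def using path_in_step[of E II x c d] by simp

lemma STAT:
  assumes t: "pa \<le> t" "t \<le> pb" and g: "h t = Inl g"
  shows "supp g \<subseteq> II \<and> (supp g \<subseteq> KK \<or> supp g \<inter> KK = {})"
proof -
  have t01: "t \<in> {0..1}" using t pa01 pb01 by simp
  from t01 show ?thesis
  proof (cases rule: A_cases)
    case (v z)
    then have "g = vpt z" using g by simp
    moreover have "pos z = t" using pos_unique(2)[OF t01 v(2)] by simp
    ultimately show ?thesis using RC[OF v(1)] t by auto
  next
    case (e u z s)
    have Ez: "E u z" "u \<in> sp" "z \<in> sp" using spE[OF e(1)] by simp_all
    have uz: "u \<noteq> z" using E_irr Ez(1) by blast
    have "g = ept u z s" using g e(4) by simp
    then have sg: "supp g = {u, z}" using supp_ept[OF uz e(2) e(3)] by simp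
    have r: "pa \<le> pos u \<and> pos u \<le> pb \<and> pa \<le> pos z \<and> pos z \<le> pb"
      using edge_in_range[OF a_sp b_sp t e] .
    have uI: "u \<in> II" "z \<in> II" using RC Ez r by simp_all
    have "u \<in> KK \<longleftrightarrow> z \<in> KK"
      using K_step[of u z] K_step[of z u] Ez(1) E_sym[OF Ez(1)] uI by blast
    then show ?thesis using sg uI by auto
  next
    case (r \<omega>)
    then show ?thesis using g by simp
  qed
qed

lemma UEC:
  assumes w: "\<omega> \<in> ends V E" and S: "finite S" and CI: "end_comp V E S \<omega> \<subseteq> II"
  shows "end_comp V E S \<omega> \<subseteq> KK \<or> end_comp V E S \<omega> \<inter> KK = {}"
proof (cases "end_comp V E S \<omega> \<inter> KK = {}")
  case True then show ?thesis by simp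
next
  case False
  then obtain c where c: "c \<in> end_comp V E S \<omega>" "c \<in> KK" by blast
  have "end_comp V E S \<omega> \<subseteq> KK"
  proof
    fix d assume d: "d \<in> end_comp V E S \<omega>"
    have "conn_avoid V E S c d" using end_comp_conn[OF w S c(1) d] .
    then have r1: "(RW E (end_comp V E S \<omega>))\<^sup>*\<^sup>* c d" by (rule end_comp_inner[OF c(1)])
    have r2: "(RW E II)\<^sup>*\<^sup>* c d" using rtc_RW_mono[OF r1 CI] .
    have cI: "c \<in> II" using CI c(1) by blast
    have p2: "path_in E II c d" unfolding path_in_iff using cI r2 by simp
    have p1: "path_in E II x c" using c(2) unfolding KK_def by simp
    have "path_in E II x d" using path_in_trans[OF p1 p2] .
    then show "d \<in> KK" unfolding KK_def by simp
  qed
  then show ?thesis by simp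
qed

lemma NOTK:
  assumes w: "\<omega> \<in> ends V E" and S: "finite S" and CK: "end_comp V E S \<omega> \<inter> KK = {}"
  shows "\<not> (\<exists>S'. finite S' \<and> S' \<subseteq> V \<and> end_comp V E S' \<omega> \<subseteq> KK)"
proof
  assume "\<exists>S'. finite S' \<and> S' \<subseteq> V \<and> end_comp V E S' \<omega> \<subseteq> KK"
  then obtain S' where S': "finite S'" "end_comp V E S' \<omega> \<subseteq> KK" by blast
  have fin: "finite (S \<union> S')" using S S'(1) by simp
  obtain c where c: "c \<in> end_comp V E (S \<union> S') \<omega>" using end_comp_nonempty[OF w fin] by blast
  have "c \<in> end_comp V E S \<omega>" using c end_comp_mono[of S "S \<union> S'"] by blast
  moreover have "c \<in> end_comp V E S' \<omega>" using c end_comp_mono[of S' "S \<union> S'"] by blast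
  ultimately show False using CK S'(2) by blast
qed

end


context mainL
begin

lemma ENDS:
  assumes t: "pa \<le> t" "t \<le> pb" and hw: "h t = Inr \<omega>"
  shows "\<exists>S. finite S \<and> S \<subseteq> V \<and> end_comp V E S \<omega> \<subseteq> II"
proof -
  have t01: "t \<in> {0..1}" using t pa01 pb01 by simp
  have "h t \<in> topspace X" using hA[OF t01] AA_top by blast
  then have wE: "\<omega> \<in> ends V E"
  proof (cases rule: topspace_cases)
    case (inl g) then show ?thesis using hw by simp
  next
    case (inr \<omega>') then show ?thesis using hw by simp
  qed
  have "t \<noteq> pa" using pos_props(2)[OF a_sp] hw by auto
  then have t1: "pa < t" using t(1) by simp
  have "t \<noteq> pb" using pos_props(2)[OF b_sp] hw by auto
  then have t2: "t < pb" using t(2) by simp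
  define Out where "Out = {0..1::real} - {pa<..<pb}"
  have "closed ({..pa} \<union> {pb..})" by (intro closed_Un closed_atMost closed_atLeast)
  moreover have "Out = {0..1} \<inter> ({..pa} \<union> {pb..})" unfolding Out_def by auto
  ultimately have "closedin (top_of_set {0..1}) Out" unfolding closedin_closed by blast
  moreover have "Out \<subseteq> topspace (top_of_set {0..1::real})" unfolding Out_def by auto
  ultimately have cl: "closedin (subtopology X AA) (h ` Out)"
    using homeomorphic_map_closedness[OF hom] by blast
  then have "openin (subtopology X AA) (topspace (subtopology X AA) - h ` Out)"
    by (simp add: closedin_def)
  then obtain U where U: "openin X U" "topspace (subtopology X AA) - h ` Out = U \<inter> AA"
    unfolding openin_subtopology by blast
  have nOut: "Inr \<omega> \<notin> h ` Out"
  proof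
    assume "Inr \<omega> \<in> h ` Out"
    then obtain s where s: "s \<in> Out" "Inr \<omega> = h s" by (rule imageE)
    have "s \<in> {0..1}" using s(1) unfolding Out_def by simp
    then have "h s = h t" using s(2) hw by simp
    then have "s = t" using hinj t01 \<open>s \<in> {0..1}\<close> unfolding inj_on_def by blast
    then show False using s(1) t1 t2 unfolding Out_def by simp
  qed
  have wA: "Inr \<omega> \<in> AA" using hA[OF t01] hw by simp
  have "Inr \<omega> \<in> topspace X" using wA AA_top by blast
  then have "Inr \<omega> \<in> topspace (subtopology X AA)" using wA by simp
  then have "Inr \<omega> \<in> U" using U(2) nOut by blast
  then obtain S0 where S0: "finite S0" "S0 \<subseteq> V" "EB V E S0 \<omega> \<subseteq> U"
    using end_nbhd[OF U(1)] by blast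
  have K1: "pa < pos z \<and> pos z < pb" if z: "z \<in> sp" "z \<in> end_comp V E S0 \<omega>" for z
  proof -
    have zV: "z \<in> V" using sp_V z(1) by blast
    have "vpt z \<in> complex_pts V E" using vpt_complex zV .
    then have "Inl (vpt z) \<in> EB V E S0 \<omega>" unfolding EB_def using z(2) by auto
    then have "Inl (vpt z) \<in> U" using S0(3) by blast
    moreover have "Inl (vpt z) \<in> AA" using vpt_in_A[OF z(1)] .
    ultimately have "Inl (vpt z) \<in> topspace (subtopology X AA) - h ` Out" using U(2) by blast
    then have "h (pos z) \<notin> h ` Out" using pos_props(2)[OF z(1)] by simp
    then have "pos z \<notin> Out" by blast
    then show ?thesis using pos_props(1)[OF z(1)] unfolding Out_def by simp
  qed
  define S where "S = S0 \<union> \<Union>((\<lambda>q. nbhd ET q) ` S0)"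
  have finS: "finite S"
  proof -
    have "finite (nbhd ET q)" if "q \<in> S0" for q
    proof -
      have "finite (nbhd E q)" using lf S0(2) that unfolding locally_finite_def by blast
      moreover have "nbhd ET q \<subseteq> nbhd E q" unfolding nbhd_def using ET_E by blast
      ultimately show ?thesis by (rule rev_finite_subset)
    qed
    then show ?thesis unfolding S_def using S0(1) by blast
  qed
  have SV: "S \<subseteq> V" unfolding S_def nbhd_def using S0(2) ET_V VTV by blast
  have "end_comp V E S \<omega> \<subseteq> II"
  proof
    fix z assume zC: "z \<in> end_comp V E S \<omega>"
    have zC0: "z \<in> end_comp V E S0 \<omega>" using zC end_comp_mono[of S0 S \<omega>] unfolding S_def by blast
    have zS: "z \<in> V" "z \<notin> S" using zC end_comp_sub by blast+
    have zVT: "z \<in> VT" using zS VTV by simp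
    show "z \<in> II"
    proof (cases "z \<in> sp")
      case True
      then show ?thesis using K1[OF True zC0] RC[OF True] by simp
    next
      case False
      have zl: "ET z (rep z)" "z \<in> LL" using rep_props(3)[OF zVT False] by simp_all
      have qs: "rep z \<in> sp" using rep_props(1)[OF zVT] .
      have qS0: "rep z \<notin> S0"
      proof
        assume "rep z \<in> S0"
        then have "z \<in> nbhd ET (rep z)" "nbhd ET (rep z) \<subseteq> S"
          using ET_sym[OF zl(1)] unfolding nbhd_def S_def by auto
        then show False using zS(2) by blast
      qed
      have "rep z \<in> end_comp V E S0 \<omega>" using end_comp_step[OF zC0 ET_E[OF zl(1)] qS0] .
      then have "pa < pos (rep z) \<and> pos (rep z) < pb" using K1[OF qs] by simp
      then show ?thesis using leaf_in[OF zl(2) zl(1) qs] by simp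
    qed
  qed
  then show ?thesis using finS SV by blast
qed

end


context mainL
begin

definition ff :: "real \<Rightarrow> bool" where
  "ff t = (case h t of Inl g \<Rightarrow> supp g \<inter> KK \<noteq> {}
          | Inr \<omega> \<Rightarrow> (\<exists>S. finite S \<and> S \<subseteq> V \<and> end_comp V E S \<omega> \<subseteq> KK))"

lemma LOC:
  assumes t: "t \<in> {pa..pb}"
  shows "eventually (\<lambda>s. ff t = ff s) (at t within {pa..pb})"
proof -
  have t01: "t \<in> {0..1}" using t pa01 pb01 by simp
  have J01: "\<And>s. s \<in> {pa..pb} \<Longrightarrow> s \<in> {0..1}" using pa01 pb01 by simp
  from t01 show ?thesis
  proof (cases rule: A_cases)
    case (v z)
    have vc: "vpt z \<in> complex_pts V E" using vpt_complex sp_V v(1) by blast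
    have Bo: "openin X (ballp V E (vpt z) (2/3))" using openin_ballp[OF vc] by simp
    have Bin: "h t \<in> ballp V E (vpt z) (2/3)" using center_in_ballp[OF vc] v(2) by simp
    obtain d where d: "d > 0" "\<forall>s\<in>{0..1}. \<bar>s - t\<bar> < d \<longrightarrow> h s \<in> ballp V E (vpt z) (2/3)"
      using cont_nbhd[OF hcont Bo t01 Bin] by blast
    have ft: "ff t = (z \<in> KK)" unfolding ff_def using v(2) by simp
    have "\<forall>s\<in>{pa..pb}. \<bar>s - t\<bar> < d \<longrightarrow> ff t = ff s"
    proof (intro ballI impI)
      fix s assume s: "s \<in> {pa..pb}" "\<bar>s - t\<bar> < d"
      have hs: "h s \<in> ballp V E (vpt z) (2/3)" using d(2) J01[OF s(1)] s(2) by blast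
      then obtain g where g: "h s = Inl g" unfolding ballp_def by blast
      have zs: "z \<in> supp g" using ballp_supp[of g V E "vpt z" "2/3" z] hs g by (simp add: vpt_def)
      have st: "supp g \<subseteq> KK \<or> supp g \<inter> KK = {}" using STAT[of s g] s(1) g by simp
      have fs: "ff s = (supp g \<inter> KK \<noteq> {})" unfolding ff_def using g by simp
      show "ff t = ff s" using ft fs st zs by blast
    qed
    then show ?thesis by (rule ev_within[OF d(1)])
  next
    case (e u z r)
    have Ez: "E u z" using spE[OF e(1)] by simp
    have uz: "u \<noteq> z" using E_irr Ez by blast
    have Oo: "openin X (oedge u z)" using oedge_open[OF Ez] .
    have Oin: "h t \<in> oedge u z" unfolding oedge_def using e by blast
    obtain d where d: "d > 0" "\<forall>s\<in>{0..1}. \<bar>s - t\<bar> < d \<longrightarrow> h s \<in> oedge u z"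
      using cont_nbhd[OF hcont Oo t01 Oin] by blast
    have ft: "ff t = ({u, z} \<inter> KK \<noteq> {})" unfolding ff_def using e(4) supp_ept[OF uz e(2) e(3)] by simp
    have "\<forall>s\<in>{pa..pb}. \<bar>s - t\<bar> < d \<longrightarrow> ff t = ff s"
    proof (intro ballI impI)
      fix s assume s: "s \<in> {pa..pb}" "\<bar>s - t\<bar> < d"
      have "h s \<in> oedge u z" using d(2) J01[OF s(1)] s(2) by blast
      then obtain r' where r': "h s = Inl (ept u z r')" "0 < r'" "r' < 1" unfolding oedge_def by blast
      have "ff s = ({u, z} \<inter> KK \<noteq> {})" unfolding ff_def using r'(1) supp_ept[OF uz r'(2) r'(3)] by simp
      then show "ff t = ff s" using ft by simp
    qed
    then show ?thesis by (rule ev_within[OF d(1)])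
  next
    case (r \<omega>)
    obtain S where S: "finite S" "S \<subseteq> V" "end_comp V E S \<omega> \<subseteq> II"
      using ENDS[of t \<omega>] t r(2) by auto
    let ?C = "end_comp V E S \<omega>"
    have Oo: "openin X (EB V E S \<omega>)" using openin_EB[OF S(1) S(2) r(1)] .
    have Oin: "h t \<in> EB V E S \<omega>" using Inr_in_EB[OF r(1)] r(2) by simp
    obtain d where d: "d > 0" "\<forall>s\<in>{0..1}. \<bar>s - t\<bar> < d \<longrightarrow> h s \<in> EB V E S \<omega>"
      using cont_nbhd[OF hcont Oo t01 Oin] by blast
    have ft: "ff t = (\<exists>S. finite S \<and> S \<subseteq> V \<and> end_comp V E S \<omega> \<subseteq> KK)" unfolding ff_def using r(2) by simp
    have "\<forall>s\<in>{pa..pb}. \<bar>s - t\<bar> < d \<longrightarrow> ff t = ff s"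
    proof (intro ballI impI)
      fix s assume s: "s \<in> {pa..pb}" "\<bar>s - t\<bar> < d"
      have hs: "h s \<in> EB V E S \<omega>" using d(2) J01[OF s(1)] s(2) by blast
      from UEC[OF r(1) S(1) S(3)] show "ff t = ff s"
      proof
        assume CK: "?C \<subseteq> KK"
        have "ff t" using ft CK S by blast
        moreover have "ff s"
        proof (cases "h s")
          case (Inl g)
          then have "supp g \<inter> ?C \<noteq> {}" using hs unfolding EB_def by auto
          then have "supp g \<inter> KK \<noteq> {}" using CK by blast
          then show ?thesis unfolding ff_def using Inl by simp
        next
          case (Inr \<omega>')
          then have "end_comp V E S \<omega>' = ?C" using hs unfolding EB_def by auto
          then have "end_comp V E S \<omega>' \<subseteq> KK" using CK by simp
          then show ?thesis unfolding ff_def using Inr S(1,2) by auto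
        qed
        ultimately show ?thesis by simp
      next
        assume CK: "?C \<inter> KK = {}"
        have "\<not> ff t" using ft NOTK[OF r(1) S(1) CK] by simp
        moreover have "\<not> ff s"
        proof (cases "h s")
          case (Inl g)
          then have "supp g \<inter> ?C \<noteq> {}" using hs unfolding EB_def by auto
          then obtain c where c: "c \<in> supp g" "c \<in> ?C" by blast
          have "c \<notin> KK" using c(2) CK by blast
          moreover have "supp g \<subseteq> KK \<or> supp g \<inter> KK = {}" using STAT[of s g] s(1) Inl by simp
          ultimately have "supp g \<inter> KK = {}" using c(1) by blast
          then show ?thesis unfolding ff_def using Inl by simp
        next
          case (Inr \<omega>')
          then have w': "\<omega>' \<in> ends V E" "end_comp V E S \<omega>' = ?C" using hs unfolding EB_def by auto
          then have "end_comp V E S \<omega>' \<inter> KK = {}" using CK by simp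
          then show ?thesis unfolding ff_def using Inr NOTK[OF w'(1) S(1)] by simp
        qed
        ultimately show ?thesis by simp
      qed
    qed
    then show ?thesis by (rule ev_within[OF d(1)])
  qed
qed

lemma main_path: "path_in E II x y"
proof -
  have J: "pa \<in> {pa..pb}" "pb \<in> {pa..pb}" using ord by simp_all
  have loc: "\<forall>t\<in>{pa..pb}. eventually (\<lambda>s. ff t = ff s) (at t within {pa..pb})"
    using LOC by blast
  have eq: "ff pa = ff pb" using connected_local_const[OF connected_Icc J(1) J(2) loc] .
  have "ff pa = (rep x \<in> KK)" unfolding ff_def using pos_props(2)[OF a_sp] by simp
  moreover have "ff pb = (rep y \<in> KK)" unfolding ff_def using pos_props(2)[OF b_sp] by simp
  ultimately have "rep y \<in> KK" using eq a_K by simp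
  then have "y \<in> KK" by (rule b_K_y)
  then show ?thesis unfolding KK_def by simp
qed

end


theorem lemma3p6:
  fixes V :: "'a set" and E :: "'a \<Rightarrow> 'a \<Rightarrow> bool"
    and VT :: "'a set" and ET :: "'a \<Rightarrow> 'a \<Rightarrow> bool"
    and h :: "real \<Rightarrow> 'a fpoint"
  assumes "simple_graph V E" and "locally_finite V E" and "connected_graph V E"
    and "top_caterpillar V E VT ET h" and "VT = V"
    and "v \<in> V" and "w \<in> V"
    and "leT VT ET h (clsT VT ET h v) (clsT VT ET h w)"
    and "x \<in> V" and "y \<in> V"
    and "lessT VT ET h (clsT VT ET h v) (clsT VT ET h x)"
    and "lessT VT ET h (clsT VT ET h x) (clsT VT ET h w)"
    and "lessT VT ET h (clsT VT ET h v) (clsT VT ET h y)"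
    and "lessT VT ET h (clsT VT ET h y) (clsT VT ET h w)"
  shows "path_in E (interval_I VT ET h v w) x y"
proof -
  interpret C: cat V E VT ET h
    by (unfold_locales) (use assms(1,2,4,5) in simp_all)
  show ?thesis
  proof (cases "arc_pos h (C.rep x) \<le> arc_pos h (C.rep y)")
    case True
    interpret M: mainL V E VT ET h v w x y
      by (unfold_locales) (use assms(6,7,9-14) True in simp_all)
    show ?thesis using M.main_path .
  next
    case False
    interpret M: mainL V E VT ET h v w y x
      by (unfold_locales) (use assms(6,7,9-14) False in simp_all)
    have p: "path_in E (interval_I VT ET h v w) y x" using M.main_path .
    have es: "\<And>a b. E a b \<Longrightarrow> E b a" using C.E_sym by blast
    show ?thesis using path_in_sym[of E, OF es p] .
  qed
qed

end
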